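(* Let $\mathfrak M$ be a closed O*-algebra on a dense subspace $\mathcal D$ of a Hilbert space $\mathcal H$ such that $\mathfrak M'_{\mathrm w}\mathcal D\subset\mathcal D$, and let $E'$ be a projection in $\mathfrak M'_{\mathrm w}$. Let $Z$ be the central support of $E'$, $\mathcal E:=\langle \mathfrak M'_{\mathrm w}E'\mathcal D\rangle\oplus (I-Z)\mathcal D$, and for $X\in(\mathfrak M_{E'})''_{\mathrm{wc}}$ let $X_e$ be the operator on $\mathcal E$ given by $X_e\big(\sum_k C_kE'\xi_k+(I-Z)\eta\big)=\sum_k C_kX(E'\xi_k)$ ($C_k\in\mathfrak M'_{\mathrm w}$, $\xi_k,\eta\in\mathcal D$). Suppose that (i) for every $X\in(\mathfrak M_{E'})''_{\mathrm{wc}}$ there exists $Y\in\mathfrak M''_{\mathrm{wc}}$ such that $\|X_e\xi\|\le\|Y\xi\|$ for all $\xi\in\mathcal E$; (ii) the closure of $\langle\mathfrak M'_{\mathrm w}E'\mathcal D\rangle$ in $\mathcal D$ with respect to the graph topology $t_{\mathfrak M''_{\mathrm{wc}}}$ equals $Z\mathcal D$. Then $(\mathfrak M_{E'})''_{\mathrm{wc}}=(\mathfrak M''_{\mathrm{wc}})_{E'}$.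
   Context: For a dense subspace $\mathcal D$ of $\mathcal H$, $\mathcal L^\dagger(\mathcal D)$ is the set of linear operators $X$ with domain $\mathcal D$ such that $X\mathcal D\subset\mathcal D$, $\mathcal D\subset D(X^* )$, $X^*\mathcal D\subset\mathcal D$, a *-algebra with involution $X^\dagger:=X^*\upharpoonright\mathcal D$. An O*-algebra on $\mathcal D$ is a *-subalgebra of $\mathcal L^\dagger(\mathcal D)$ containing the identity. The graph topology $t_{\mathfrak M}$ is defined by the seminorms $\xi\mapsto\|X\xi\|$, $X\in\mathfrak M$; $\mathfrak M$ is closed if $\mathcal D[t_{\mathfrak M}]$ is complete. Weak commutant: $\mathfrak M'_{\mathrm w}=\{C\in\mathcal B(\mathcal H):\langle CX\xi,\eta\rangle=\langle C\xi,X^\dagger\eta\rangle\ \forall X\in\mathfrak M,\ \xi,\eta\in\mathcal D\}$ (a von Neumann algebra when $\mathfrak M'_{\mathrm w}\mathcal D\subset\mathcal D$). Unbounded bicommutant: $\mathfrak M''_{\mathrm{wc}}=\{X\in\mathcal L^\dagger(\mathcal D):\langle CX\xi,\eta\rangle=\langle C\xi,X^\dagger\eta\rangle\ \forall C\in\mathfrak M'_{\mathrm w},\ \xi,\eta\in\mathcal D\}$; it satisfies $(\mathfrak M''_{\mathrm{wc}})'_{\mathrm w}=\mathfrak M'_{\mathrm w}$. For an O*-algebra $\mathfrak N$ on $\mathcal D$ and a projection $E'\in\mathfrak N'_{\mathrm w}$ with $E'\mathcal D\subset\mathcal D$, the reduced algebra is $\mathfrak N_{E'}=\{XE'\upharpoonright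 E'\mathcal D: X\in\mathfrak N\}$, an O*-algebra on $E'\mathcal D$ in the Hilbert space $E'\mathcal H$; $(\mathfrak M_{E'})''_{\mathrm{wc}}$ is its unbounded bicommutant computed relative to $E'\mathcal D\subset E'\mathcal H$. The central support $Z$ of $E'$ is the projection onto the closure of $\langle\mathfrak M'_{\mathrm w}E'\mathcal H\rangle$; $\langle\cdot\rangle$ denotes linear span. *)

theory Defs
  imports Complex_Main
begin

record 'a hs =
  hs_sm :: "complex \<Rightarrow> 'a \<Rightarrow> 'a"
  hs_ip :: "'a \<Rightarrow> 'a \<Rightarrow> complex"

definition hnorm :: "'a hs \<Rightarrow> 'a \<Rightarrow> real" where
  "hnorm H x = sqrt (Re (hs_ip H x x))"

definition is_hilbert :: "('a::ab_group_add) hs \<Rightarrow> bool" where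
  "is_hilbert H \<longleftrightarrow>
     vector_space (hs_sm H) \<and>
     (\<forall>x y z. hs_ip H (x + y) z = hs_ip H x z + hs_ip H y z) \<and>
     (\<forall>c x y. hs_ip H (hs_sm H c x) y = c * hs_ip H x y) \<and>
     (\<forall>x y. hs_ip H y x = cnj (hs_ip H x y)) \<and>
     (\<forall>x. x \<noteq> 0 \<longrightarrow> 0 < Re (hs_ip H x x)) \<and>
     (\<forall>f :: nat \<Rightarrow> 'a.
        (\<forall>e>0. \<exists>N. \<forall>m\<ge>N. \<forall>n\<ge>N. hnorm H (f m - f n) < e) \<longrightarrow>
        (\<exists>l. \<forall>e>0. \<exists>N. \<forall>n\<ge>N. hnorm H (f n - l) < e))"

definition hsubspace :: "('a::ab_group_add) hs \<Rightarrow> 'a set \<Rightarrow> bool" where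
  "hsubspace H S \<longleftrightarrow> 0 \<in> S \<and> (\<forall>x\<in>S. \<forall>y\<in>S. x + y \<in> S) \<and>
     (\<forall>c. \<forall>x\<in>S. hs_sm H c x \<in> S)"

definition hclosure :: "('a::ab_group_add) hs \<Rightarrow> 'a set \<Rightarrow> 'a set" where
  "hclosure H S = {x. \<forall>e>0. \<exists>y\<in>S. hnorm H (x - y) < e}"

definition bop :: "('a::ab_group_add) hs \<Rightarrow> 'a set \<Rightarrow> ('a \<Rightarrow> 'a) \<Rightarrow> bool" where
  "bop H K C \<longleftrightarrow> (\<forall>x\<in>K. C x \<in> K) \<and>
     (\<forall>x\<in>K. \<forall>y\<in>K. C (x + y) = C x + C y) \<and>
     (\<forall>c. \<forall>x\<in>K. C (hs_sm H c x) = hs_sm H c (C x)) \<and>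
     (\<exists>B. \<forall>x\<in>K. hnorm H (C x) \<le> B * hnorm H x) \<and>
     (\<forall>x. x \<notin> K \<longrightarrow> C x = 0)"

definition is_projection :: "('a::ab_group_add) hs \<Rightarrow> 'a set \<Rightarrow> ('a \<Rightarrow> 'a) \<Rightarrow> bool" where
  "is_projection H K P \<longleftrightarrow> bop H K P \<and> (\<forall>x\<in>K. P (P x) = P x) \<and>
     (\<forall>x\<in>K. \<forall>y\<in>K. hs_ip H (P x) y = hs_ip H x (P y))"

text \<open>L^dagger(D): operators with domain D (normalised to 0 outside D),
  X D \<subseteq> D, D \<subseteq> D(X^*), X^* D \<subseteq> D.\<close>
definition ldag :: "('a::ab_group_add) hs \<Rightarrow> 'a set \<Rightarrow> ('a \<Rightarrow> 'a) \<Rightarrow> bool" where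
  "ldag H D X \<longleftrightarrow> (\<forall>x\<in>D. X x \<in> D) \<and>
     (\<forall>x\<in>D. \<forall>y\<in>D. X (x + y) = X x + X y) \<and>
     (\<forall>c. \<forall>x\<in>D. X (hs_sm H c x) = hs_sm H c (X x)) \<and>
     (\<forall>x. x \<notin> D \<longrightarrow> X x = 0) \<and>
     (\<forall>\<eta>\<in>D. \<exists>\<zeta>\<in>D. \<forall>\<xi>\<in>D. hs_ip H (X \<xi>) \<eta> = hs_ip H \<xi> \<zeta>)"

definition dag :: "('a::ab_group_add) hs \<Rightarrow> 'a set \<Rightarrow> ('a \<Rightarrow> 'a) \<Rightarrow> ('a \<Rightarrow> 'a)" where
  "dag H D X = (\<lambda>\<eta>. if \<eta> \<in> D then (THE \<zeta>. \<zeta> \<in> D \<and> (\<forall>\<xi>\<in>D. hs_ip H (X \<xi>) \<eta> = hs_ip H \<xi> \<zeta>))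
                     else 0)"

definition idop :: "'a set \<Rightarrow> ('a::ab_group_add \<Rightarrow> 'a)" where
  "idop D = (\<lambda>x. if x \<in> D then x else 0)"

definition ostar_alg :: "('a::ab_group_add) hs \<Rightarrow> 'a set \<Rightarrow> ('a \<Rightarrow> 'a) set \<Rightarrow> bool" where
  "ostar_alg H D M \<longleftrightarrow> (\<forall>X\<in>M. ldag H D X) \<and> idop D \<in> M \<and>
     (\<forall>X\<in>M. \<forall>Y\<in>M. (\<lambda>x. X x + Y x) \<in> M) \<and>
     (\<forall>c. \<forall>X\<in>M. (\<lambda>x. hs_sm H c (X x)) \<in> M) \<and>
     (\<forall>X\<in>M. \<forall>Y\<in>M. X \<circ> Y \<in> M) \<and>
     (\<forall>X\<in>M. dag H D X \<in> M)"

text \<open>Closed: D is complete for the graph topology t_M (every Cauchy filter on D converges).\<close>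
definition closed_ostar :: "('a::ab_group_add) hs \<Rightarrow> 'a set \<Rightarrow> ('a \<Rightarrow> 'a) set \<Rightarrow> bool" where
  "closed_ostar H D M \<longleftrightarrow> ostar_alg H D M \<and>
     (\<forall>F :: 'a filter. F \<noteq> bot \<and> eventually (\<lambda>x. x \<in> D) F \<and>
        (\<forall>X\<in>M. \<forall>e>0. \<exists>P. eventually P F \<and>
            (\<forall>x y. P x \<and> P y \<and> x \<in> D \<and> y \<in> D \<longrightarrow> hnorm H (X (x - y)) < e)) \<longrightarrow>
        (\<exists>l\<in>D. \<forall>X\<in>M. \<forall>e>0. eventually (\<lambda>x. hnorm H (X (x - l)) < e) F))"

definition wcomm :: "('a::ab_group_add) hs \<Rightarrow> 'a set \<Rightarrow> 'a set \<Rightarrow> ('a \<Rightarrow> 'a) set \<Rightarrow> ('a \<Rightarrow> 'a) set" where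
  "wcomm H K D M = {C. bop H K C \<and>
     (\<forall>X\<in>M. \<forall>\<xi>\<in>D. \<forall>\<eta>\<in>D. hs_ip H (C (X \<xi>)) \<eta> = hs_ip H (C \<xi>) (dag H D X \<eta>))}"

definition bicomm :: "('a::ab_group_add) hs \<Rightarrow> 'a set \<Rightarrow> 'a set \<Rightarrow> ('a \<Rightarrow> 'a) set \<Rightarrow> ('a \<Rightarrow> 'a) set" where
  "bicomm H K D M = {X. ldag H D X \<and>
     (\<forall>C\<in>wcomm H K D M. \<forall>\<xi>\<in>D. \<forall>\<eta>\<in>D. hs_ip H (C (X \<xi>)) \<eta> = hs_ip H (C \<xi>) (dag H D X \<eta>))}"

definition reduce :: "('a \<Rightarrow> 'a) \<Rightarrow> 'a set \<Rightarrow> ('a \<Rightarrow> 'a) set \<Rightarrow> ('a::ab_group_add \<Rightarrow> 'a) set" where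
  "reduce E D N = (\<lambda>X. \<lambda>x. if x \<in> E ` D then X (E x) else 0) ` N"

definition orth_proj :: "('a::ab_group_add) hs \<Rightarrow> 'a set \<Rightarrow> 'a \<Rightarrow> 'a" where
  "orth_proj H S x = (THE y. y \<in> S \<and> (\<forall>z\<in>S. hs_ip H (x - y) z = 0))"

definition central_support :: "('a::ab_group_add) hs \<Rightarrow> 'a set \<Rightarrow> 'a set \<Rightarrow> ('a \<Rightarrow> 'a) set \<Rightarrow> ('a \<Rightarrow> 'a) \<Rightarrow> 'a \<Rightarrow> 'a" where
  "central_support H K D M E = orth_proj H
     (hclosure H (module.span (hs_sm H) {C (E x) | C x. C \<in> wcomm H K D M \<and> x \<in> K}))"

text \<open>Closure of S in D for the graph topology t_N (N a set of operators on D).\<close>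
definition tclosure :: "('a::ab_group_add) hs \<Rightarrow> ('a \<Rightarrow> 'a) set \<Rightarrow> 'a set \<Rightarrow> 'a set \<Rightarrow> 'a set" where
  "tclosure H N D S = {x\<in>D. \<forall>F. finite F \<and> F \<subseteq> N \<longrightarrow>
     (\<forall>e>0. \<exists>y\<in>S. \<forall>Y\<in>F. hnorm H (Y (x - y)) < e)}"

end

theory Submission
  imports Defs
begin

locale hsp =
  fixes H :: "('a::ab_group_add) hs"
  assumes hilb: "is_hilbert H"
begin

sublocale vs: vector_space "hs_sm H"
  using hilb unfolding is_hilbert_def by (rule conjunct1)

abbreviation sm where "sm \<equiv> hs_sm H"
abbreviation ip where "ip \<equiv> hs_ip H"
abbreviation nm where "nm \<equiv> hnorm H"

lemma ip_add_left: "ip (x + y) z = ip x z + ip y z"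
  using hilb unfolding is_hilbert_def by blast
lemma ip_scale_left: "ip (sm c x) y = c * ip x y"
  using hilb unfolding is_hilbert_def by blast
lemma ip_sym: "ip y x = cnj (ip x y)"
  using hilb unfolding is_hilbert_def by blast
lemma ip_pos: "x \<noteq> 0 \<Longrightarrow> 0 < Re (ip x x)"
  using hilb unfolding is_hilbert_def by blast
lemma complete_all: "\<forall>f :: nat \<Rightarrow> 'a. (\<forall>e>0. \<exists>N. \<forall>m\<ge>N. \<forall>n\<ge>N. nm (f m - f n) < e) \<longrightarrow>
        (\<exists>l. \<forall>e>0. \<exists>N. \<forall>n\<ge>N. nm (f n - l) < e)"
  using hilb unfolding is_hilbert_def by (elim conjE) assumption
lemma complete: fixes f :: "nat \<Rightarrow> 'a" shows "(\<forall>e>0. \<exists>N. \<forall>m\<ge>N. \<forall>n\<ge>N. nm (f m - f n) < e) \<Longrightarrow>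
        (\<exists>l. \<forall>e>0. \<exists>N. \<forall>n\<ge>N. nm (f n - l) < e)"
  using complete_all by blast

lemma ip_add_right: "ip x (y + z) = ip x y + ip x z"
  by (metis complex_cnj_add ip_add_left ip_sym)
lemma ip_scale_right: "ip x (sm c y) = cnj c * ip x y"
  by (metis complex_cnj_mult ip_scale_left ip_sym)
lemma ip_zero_left[simp]: "ip 0 y = 0"
  by (metis add_cancel_right_left add_left_cancel ip_add_left add.right_neutral)
lemma ip_zero_right[simp]: "ip x 0 = 0"
  by (metis complex_cnj_zero ip_sym ip_zero_left)
lemma ip_minus_left: "ip (- x) y = - ip x y"
  by (metis add.right_inverse eq_neg_iff_add_eq_0 ip_add_left ip_zero_left)
lemma ip_minus_right: "ip x (- y) = - ip x y"
  by (metis complex_cnj_minus ip_minus_left ip_sym)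
lemma ip_diff_left: "ip (x - y) z = ip x z - ip y z"
  by (metis diff_conv_add_uminus ip_add_left ip_minus_left)
lemma ip_diff_right: "ip x (y - z) = ip x y - ip x z"
  by (metis diff_conv_add_uminus ip_add_right ip_minus_right)
lemma ip_sum_left: "ip (sum f A) y = (\<Sum>i\<in>A. ip (f i) y)"
  by (induct A rule: infinite_finite_induct) (auto simp: ip_add_left)
lemma ip_sum_right: "ip y (sum f A) = (\<Sum>i\<in>A. ip y (f i))"
  by (induct A rule: infinite_finite_induct) (auto simp: ip_add_right)

lemma ip_self_real: "ip x x = of_real (Re (ip x x))"
  by (metis Reals_cnj_iff complex_is_Real_iff ip_sym of_real_Re)
lemma ip_self_nonneg: "0 \<le> Re (ip x x)"
proof (cases "x = 0")
  case True then have "ip x x = 0" by simp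
  then show ?thesis by simp
next
  case False
  have "0 < Re (ip x x)" by (rule ip_pos[OF False])
  then show ?thesis by (rule less_imp_le)
qed
lemma nm_nonneg[simp]: "0 \<le> nm x"
  by (simp add: hnorm_def ip_self_nonneg)
lemma nm_sq: "(nm x)^2 = Re (ip x x)"
  by (simp add: hnorm_def ip_self_nonneg)
lemma ip_self_nm: "ip x x = of_real ((nm x)^2)"
  by (metis ip_self_real nm_sq)
lemma nm_zero[simp]: "nm 0 = 0"
  by (simp add: hnorm_def)
lemma nm_eq0: "nm x = 0 \<longleftrightarrow> x = 0"
  by (metis hnorm_def ip_pos less_irrefl nm_zero real_sqrt_eq_zero_cancel_iff)
lemma nm_pos: "x \<noteq> 0 \<Longrightarrow> 0 < nm x"
  by (metis le_less nm_eq0 nm_nonneg)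

lemma ip_self_eq0: "ip x x = 0 \<longleftrightarrow> x = 0"
  by (metis ip_pos ip_zero_left less_irrefl zero_complex.sel(1))

lemma cs: "cmod (ip x y) \<le> nm x * nm y"
proof (cases "y = 0")
  case True then show ?thesis by simp
next
  case False
  define r where "r = Re (ip y y)"
  have r: "r > 0" using ip_pos[OF False] r_def by simp
  have ryy: "ip y y = of_real r" using ip_self_real r_def by simp
  define t where "t = ip x y / of_real r"
  have cnsq: "(complex_of_real (cmod (ip x y)))^2 = ip x y * cnj (ip x y)"
    by (metis complex_norm_square of_real_power)
  have "0 \<le> Re (ip (x - sm t y) (x - sm t y))" by (rule ip_self_nonneg)
  also have "ip (x - sm t y) (x - sm t y) = ip x x - cnj t * ip x y - t * ip y x + t * cnj t * ip y y"
    by (simp add: ip_diff_left ip_diff_right ip_scale_left ip_scale_right algebra_simps)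
  also have "\<dots> = ip x x - of_real ((cmod (ip x y))^2 / r)"
    using r unfolding t_def ryy ip_sym[of y x]
    by (simp add: field_simps cnsq)
  finally have "(cmod (ip x y))^2 / r \<le> Re (ip x x)" by simp
  hence "(cmod (ip x y))^2 \<le> (nm x)^2 * (nm y)^2"
    using r by (simp add: nm_sq r_def field_simps)
  hence "(cmod (ip x y))^2 \<le> (nm x * nm y)^2" by (simp add: power_mult_distrib)
  thus ?thesis by (rule power2_le_imp_le) simp
qed

lemma ip_self_add: "ip (x + y) (x + y) = ip x x + ip x y + cnj (ip x y) + ip y y"
  by (simp add: ip_add_left ip_add_right ip_sym[of y x])

lemma nm_triangle: "nm (x + y) \<le> nm x + nm y"
proof -
  have "(nm (x + y))^2 = Re (ip x x) + 2 * Re (ip x y) + Re (ip y y)"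
    by (simp add: nm_sq ip_self_add)
  also have "\<dots> \<le> (nm x)^2 + 2 * (nm x * nm y) + (nm y)^2"
    using cs[of x y] complex_Re_le_cmod[of "ip x y"] by (simp add: nm_sq)
  also have "\<dots> = (nm x + nm y)^2" by (simp add: power2_eq_square algebra_simps)
  finally show ?thesis by (rule power2_le_imp_le) simp
qed

lemma nm_scale: "nm (sm c x) = cmod c * nm x"
proof -
  have "ip (sm c x) (sm c x) = (c * cnj c) * ip x x"
    by (simp add: ip_scale_left ip_scale_right)
  also have "c * cnj c = of_real ((cmod c)^2)" by (metis complex_norm_square)
  finally have "Re (ip (sm c x) (sm c x)) = (cmod c)^2 * Re (ip x x)"
    by simp
  hence "(nm (sm c x))^2 = (cmod c * nm x)^2"
    by (simp add: nm_sq power_mult_distrib)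
  thus ?thesis by (simp add: power2_eq_iff_nonneg)
qed

lemma minus_eq_scale: "- x = sm (-1) x"
  by simp

lemma nm_minus: "nm (- x) = nm x"
  by (simp add: minus_eq_scale nm_scale del: vs.scale_minus_left)

lemma nm_commute: "nm (x - y) = nm (y - x)"
  by (metis minus_diff_eq nm_minus)

lemma nm_triangle_diff: "nm (x - z) \<le> nm (x - y) + nm (y - z)"
  by (metis diff_add_cancel add_diff_eq nm_triangle diff_diff_eq2)

lemma nm_diff_le: "nm (x - y) \<le> nm x + nm y"
  by (metis diff_conv_add_uminus nm_minus nm_triangle)

end

context hsp begin

definition dense_in :: "'a set \<Rightarrow> 'a set \<Rightarrow> bool" where
  "dense_in K D0 \<longleftrightarrow> (\<forall>x\<in>K. \<forall>e>0. \<exists>d\<in>D0. nm (x - d) < e)"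

lemma hsub_0: "hsubspace H K \<Longrightarrow> 0 \<in> K" by (simp add: hsubspace_def)
lemma hsub_add: "hsubspace H K \<Longrightarrow> x \<in> K \<Longrightarrow> y \<in> K \<Longrightarrow> x + y \<in> K" by (simp add: hsubspace_def)
lemma hsub_sm: "hsubspace H K \<Longrightarrow> x \<in> K \<Longrightarrow> sm c x \<in> K" by (simp add: hsubspace_def)
lemma hsub_minus: "hsubspace H K \<Longrightarrow> x \<in> K \<Longrightarrow> - x \<in> K"
  by (metis hsub_sm minus_eq_scale)
lemma hsub_diff: "hsubspace H K \<Longrightarrow> x \<in> K \<Longrightarrow> y \<in> K \<Longrightarrow> x - y \<in> K"
  by (metis diff_conv_add_uminus hsub_add hsub_minus)
lemma hsub_sum: "hsubspace H K \<Longrightarrow> (\<And>i. i \<in> A \<Longrightarrow> f i \<in> K) \<Longrightarrow> sum f A \<in> K"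
  by (induct A rule: infinite_finite_induct) (auto simp: hsub_0 hsub_add)
lemma hsub_UNIV: "hsubspace H UNIV" by (simp add: hsubspace_def)

lemma nm_small_zero: assumes "\<And>e. e > 0 \<Longrightarrow> nm x < e" shows "x = 0"
  using assms[of "nm x"] nm_eq0 nm_pos by force

lemma orth_zero:
  assumes "dense_in K D0" "z \<in> K" "\<forall>d\<in>D0. ip d z = 0"
  shows "z = 0"
proof (rule ccontr)
  assume nz: "z \<noteq> 0"
  hence p: "nm z > 0" by (rule nm_pos)
  obtain d where d: "d \<in> D0" "nm (z - d) < nm z / 2"
    using assms(1,2) p unfolding dense_in_def by (metis half_gt_zero)
  have "ip z z = ip (z - d) z" using assms(3) d(1) by (simp add: ip_diff_left)
  hence "cmod (ip z z) \<le> nm (z - d) * nm z" using cs by simp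
  also have "\<dots> \<le> nm z / 2 * nm z" using d(2) p by (intro mult_right_mono) auto
  finally have 1: "cmod (ip z z) \<le> nm z / 2 * nm z" .
  have "cmod (ip z z) = nm z * nm z" by (simp add: ip_self_nm power2_eq_square abs_of_nonneg del: of_real_mult)
  hence "nm z * nm z \<le> nm z / 2 * nm z" using 1 by simp
  hence "nm z \<le> nm z / 2" using p by (rule mult_right_le_imp_le)
  thus False using p by linarith
qed

lemma dag_unique:
  assumes "dense_in K D0" "D0 \<subseteq> K" "hsubspace H K" "\<eta> \<in> D0" "\<zeta> \<in> D0"
    "\<forall>\<xi>\<in>D0. ip (X \<xi>) \<eta> = ip \<xi> \<zeta>"
  shows "dag H D0 X \<eta> = \<zeta>"
proof -
  have "(THE \<zeta>. \<zeta> \<in> D0 \<and> (\<forall>\<xi>\<in>D0. ip (X \<xi>) \<eta> = ip \<xi> \<zeta>)) = \<zeta>"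
  proof (rule the_equality)
    show "\<zeta> \<in> D0 \<and> (\<forall>\<xi>\<in>D0. ip (X \<xi>) \<eta> = ip \<xi> \<zeta>)" using assms by auto
  next
    fix z assume z: "z \<in> D0 \<and> (\<forall>\<xi>\<in>D0. ip (X \<xi>) \<eta> = ip \<xi> z)"
    have "z - \<zeta> = 0"
    proof (rule orth_zero[OF assms(1)])
      show "z - \<zeta> \<in> K" using z assms(2,3,5) by (auto intro: hsub_diff)
      show "\<forall>d\<in>D0. ip d (z - \<zeta>) = 0" using z assms(6) by (simp add: ip_diff_right)
    qed
    thus "z = \<zeta>" by simp
  qed
  thus ?thesis using assms(4) by (simp add: dag_def)
qed

lemma dag_prop:
  assumes "dense_in K D0" "D0 \<subseteq> K" "hsubspace H K" "ldag H D0 X" "\<eta> \<in> D0"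
  shows "dag H D0 X \<eta> \<in> D0" "\<forall>\<xi>\<in>D0. ip (X \<xi>) \<eta> = ip \<xi> (dag H D0 X \<eta>)"
proof -
  obtain \<zeta> where z: "\<zeta> \<in> D0" "\<forall>\<xi>\<in>D0. ip (X \<xi>) \<eta> = ip \<xi> \<zeta>"
    using assms(4,5) unfolding ldag_def by blast
  have "dag H D0 X \<eta> = \<zeta>" by (rule dag_unique[OF assms(1-3,5) z])
  thus "dag H D0 X \<eta> \<in> D0" "\<forall>\<xi>\<in>D0. ip (X \<xi>) \<eta> = ip \<xi> (dag H D0 X \<eta>)" using z by auto
qed

lemma dag_out: "\<eta> \<notin> D0 \<Longrightarrow> dag H D0 X \<eta> = 0"
  by (simp add: dag_def)

lemma hclosureD: "x \<in> hclosure H S \<Longrightarrow> e > 0 \<Longrightarrow> \<exists>y\<in>S. nm (x - y) < e"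
  unfolding hclosure_def by blast
lemma hclosureI: "(\<And>e. e > 0 \<Longrightarrow> \<exists>y\<in>S. nm (x - y) < e) \<Longrightarrow> x \<in> hclosure H S"
  unfolding hclosure_def by blast

lemma hclosure_sup: "S \<subseteq> hclosure H S"
proof
  fix x assume x: "x \<in> S" show "x \<in> hclosure H S" unfolding hclosure_def mem_Collect_eq
  proof (intro allI impI)
    fix e :: real assume "e > 0" thus "\<exists>y\<in>S. nm (x - y) < e" using x by (intro bexI[of _ x]) auto
  qed
qed

lemma hclosure_closed: "hclosure H (hclosure H S) \<subseteq> hclosure H S"
proof
  fix x assume x: "x \<in> hclosure H (hclosure H S)"
  show "x \<in> hclosure H S"
  proof (rule hclosureI)
    fix e :: real assume e: "e > 0"
    obtain y where y: "y \<in> hclosure H S" "nm (x - y) < e/2" using hclosureD[OF x, of "e/2"] e by auto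
    obtain z where z: "z \<in> S" "nm (y - z) < e/2" using hclosureD[OF y(1), of "e/2"] e by auto
    have "nm (x - z) < e" using nm_triangle_diff[of x z y] y z by linarith
    thus "\<exists>y\<in>S. nm (x - y) < e" using z by blast
  qed
qed

lemma hclosure_subspace:
  assumes "hsubspace H S" shows "hsubspace H (hclosure H S)"
  unfolding hsubspace_def
proof (intro conjI ballI allI)
  show "0 \<in> hclosure H S" using hclosure_sup hsub_0[OF assms] by blast
next
  fix x y assume x: "x \<in> hclosure H S" and y: "y \<in> hclosure H S"
  show "x + y \<in> hclosure H S"
  proof (rule hclosureI)
    fix e :: real assume e: "e > 0"
    obtain a where a: "a \<in> S" "nm (x - a) < e/2" using hclosureD[OF x, of "e/2"] e by auto
    obtain b where b: "b \<in> S" "nm (y - b) < e/2" using hclosureD[OF y(1), of "e/2"] e by auto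
    have eq: "x + y - (a + b) = (x - a) + (y - b)" by (simp add: algebra_simps)
    have "nm (x + y - (a + b)) \<le> nm (x - a) + nm (y - b)" by (subst eq) (rule nm_triangle)
    hence "nm (x + y - (a + b)) < e" using a b by linarith
    thus "\<exists>z\<in>S. nm (x + y - z) < e" using a b hsub_add[OF assms] by blast
  qed
next
  fix c x assume x: "x \<in> hclosure H S"
  show "sm c x \<in> hclosure H S"
  proof (rule hclosureI)
    fix e :: real assume e: "e > 0"
    have e': "e / (cmod c + 1) > 0" using e norm_ge_zero[of c] by (intro divide_pos_pos) linarith+
    obtain a where a: "a \<in> S" "nm (x - a) < e / (cmod c + 1)" using hclosureD[OF x e'] by auto
    have "nm (sm c x - sm c a) = cmod c * nm (x - a)"
      by (simp add: nm_scale flip: vs.scale_right_diff_distrib)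
    also have "\<dots> \<le> (cmod c + 1) * nm (x - a)" by (simp add: mult_right_mono)
    also have "\<dots> < e" using a(2) norm_ge_zero[of c]
      by (metis add_nonneg_pos mult.commute pos_less_divide_eq zero_less_one)
    finally show "\<exists>z\<in>S. nm (sm c x - z) < e" using a hsub_sm[OF assms] by blast
  qed
qed

end

context hsp begin

lemma ip_self_diff: "ip (x - y) (x - y) = ip x x - ip x y - cnj (ip x y) + ip y y"
  by (simp add: ip_diff_left ip_diff_right ip_sym[of y x])

lemma parallelogram: "(nm (a - b))^2 + (nm (a + b))^2 = 2 * (nm a)^2 + 2 * (nm b)^2"
  by (simp add: nm_sq ip_self_diff ip_self_add)

lemma min_orth:
  assumes K: "hsubspace H K" and y: "y \<in> K" and mn: "\<forall>z\<in>K. nm (x - y) \<le> nm (x - z)"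
    and z: "z \<in> K"
  shows "ip (x - y) z = 0"
proof (rule ccontr)
  define v where "v = x - y"
  define w where "w = ip v z"
  assume "ip (x - y) z \<noteq> 0"
  hence wnz: "w \<noteq> 0" by (simp add: v_def w_def)
  define q where "q = (cmod w)^2"
  have q: "q > 0" using wnz by (simp add: q_def)
  have hq: "w * cnj w = of_real q" by (metis q_def complex_norm_square)
  define s where "s = 1 / ((nm z)^2 + 1)"
  have p1: "(nm z)^2 + 1 > 0" by (smt (verit) zero_le_power2)
  have s: "s > 0" using p1 by (simp add: s_def)
  have s1: "s * (nm z)^2 < 1" using p1 by (simp add: s_def field_simps)
  define c where "c = of_real s * w"
  have yK: "y + sm c z \<in> K" using K y z by (simp add: hsub_add hsub_sm)
  have "x - (y + sm c z) = v - sm c z" by (simp add: v_def algebra_simps)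
  hence "nm v \<le> nm (v - sm c z)" using mn yK v_def by metis
  hence "(nm v)^2 \<le> (nm (v - sm c z))^2" by (simp add: power_mono)
  moreover
  have e1: "ip (v - sm c z) (v - sm c z) = ip v v - cnj c * w - c * cnj w + c * cnj c * ip z z"
    by (simp add: ip_self_diff ip_scale_left ip_scale_right w_def ip_sym[of z v] algebra_simps)
  have e2: "cnj c * w = of_real (s * q)" "c * cnj w = of_real (s * q)"
    "c * cnj c * ip z z = of_real (s^2 * q * (nm z)^2)"
    by (simp_all add: c_def hq[symmetric] ip_self_nm power2_eq_square algebra_simps)
  have "ip (v - sm c z) (v - sm c z) = of_real ((nm v)^2 - s * q - s * q + s^2 * q * (nm z)^2)"
    unfolding e1 e2 ip_self_nm[of v] by simp
  hence "(nm (v - sm c z))^2 = (nm v)^2 - 2 * s * q + s^2 * q * (nm z)^2"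
    by (simp add: nm_sq[of "v - sm c z"])
  ultimately have "(nm v)^2 \<le> (nm v)^2 - 2 * s * q + s^2 * q * (nm z)^2"
    by simp
  hence "2 * (s * q) \<le> (s * q) * (s * (nm z)^2)" by (simp add: power2_eq_square algebra_simps)
  hence "2 \<le> s * (nm z)^2" using s q by (simp add: mult_le_cancel_left1)
  thus False using s1 by linarith
qed

lemma proj_exists:
  assumes K: "hsubspace H K" and cl: "hclosure H K \<subseteq> K"
  shows "\<exists>y\<in>K. \<forall>z\<in>K. ip (x - y) z = 0"
proof -
  define d where "d = Inf ((\<lambda>y. nm (x - y)) ` K)"
  have ne: "(\<lambda>y. nm (x - y)) ` K \<noteq> {}" using hsub_0[OF K] by auto
  have bdd: "bdd_below ((\<lambda>y. nm (x - y)) ` K)" by (rule bdd_belowI[of _ 0]) auto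
  have dle: "\<And>y. y \<in> K \<Longrightarrow> d \<le> nm (x - y)" unfolding d_def using bdd by (auto intro: cInf_lower)
  have d0: "d \<ge> 0" unfolding d_def using ne by (auto intro: cInf_greatest)
  have ex: "\<exists>y\<in>K. nm (x - y) < d + e" if e: "e > 0" for e
  proof (rule ccontr)
    assume "\<not> ?thesis"
    hence "\<forall>y\<in>K. d + e \<le> nm (x - y)" by auto
    hence a: "\<And>t. t \<in> (\<lambda>y. nm (x - y)) ` K \<Longrightarrow> d + e \<le> t" by auto
    have "d + e \<le> d" unfolding d_def[symmetric] using cInf_greatest[OF ne a] by (simp add: d_def)
    thus False using e by simp
  qed
  have key: "(nm (y1 - y2))^2 \<le> 2 * (nm (x - y1))^2 + 2 * (nm (x - y2))^2 - 4 * d^2"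
    if y1: "y1 \<in> K" and y2: "y2 \<in> K" for y1 y2
  proof -
    define m where "m = sm (1/2) (y1 + y2)"
    have mK: "m \<in> K" using K y1 y2 by (simp add: m_def hsub_add hsub_sm)
    have "sm 2 (x - m) = (x - y1) + (x - y2)"
    proof -
      have "sm 2 m = y1 + y2" by (simp add: m_def)
      moreover have "sm 2 x = x + x" using vs.scale_left_distrib[of 1 1 x] by simp
      ultimately show ?thesis by (simp add: vs.scale_right_diff_distrib algebra_simps)
    qed
    hence "nm ((x - y1) + (x - y2)) = 2 * nm (x - m)" by (metis nm_scale norm_numeral)
    hence "nm ((x - y1) + (x - y2)) \<ge> 2 * d" using dle[OF mK] by simp
    hence "(nm ((x - y1) + (x - y2)))^2 \<ge> (2 * d)^2" by (rule power_mono) (use d0 in simp)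
    moreover have "(x - y1) - (x - y2) = y2 - y1" by simp
    ultimately show ?thesis using parallelogram[of "x - y1" "x - y2"] nm_commute[of y1 y2]
      by (simp add: power2_eq_square)
  qed
  have "\<forall>n. \<exists>y. y \<in> K \<and> nm (x - y) < d + 1 / (real n + 1)"
  proof
    fix n :: nat have "1 / (real n + 1) > 0" by simp
    thus "\<exists>y. y \<in> K \<and> nm (x - y) < d + 1 / (real n + 1)" using ex by blast
  qed
  then obtain y where yK: "\<And>n. y n \<in> K" and yd: "\<And>n. nm (x - y n) < d + 1 / (real n + 1)"
    by metis
  have cauchy: "\<forall>e>0. \<exists>N. \<forall>m\<ge>N. \<forall>n\<ge>N. nm (y m - y n) < e"
  proof (intro allI impI)
    fix e :: real assume e: "e > 0"
    obtain N :: nat where N: "(4 * d + 2) * 2 / e^2 < real N + 1"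
      using reals_Archimedean2[of "(4 * d + 2) * 2 / e^2"] by (metis add.commute add_strict_increasing zero_less_one less_imp_le)
    have bnd: "(nm (y m - y n))^2 < e^2" if m: "m \<ge> N" and n: "n \<ge> N" for m n
    proof -
      define a where "a = 1 / (real m + 1)"
      define b where "b = 1 / (real n + 1)"
      have a0: "a > 0" "a \<le> 1" and b0: "b > 0" "b \<le> 1" by (simp_all add: a_def b_def)
      have ab: "a + b \<le> 2 / (real N + 1)"
      proof -
        have "a \<le> 1 / (real N + 1)" unfolding a_def using m by (simp add: frac_le)
        moreover have "b \<le> 1 / (real N + 1)" unfolding b_def using n by (simp add: frac_le)
        ultimately show ?thesis by simp
      qed
      have "(nm (x - y m))^2 \<le> (d + a)^2" using yd[of m] by (simp add: a_def power_mono less_imp_le)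
      moreover have "(nm (x - y n))^2 \<le> (d + b)^2" using yd[of n] by (simp add: b_def power_mono less_imp_le)
      ultimately have "(nm (y m - y n))^2 \<le> 2 * (d + a)^2 + 2 * (d + b)^2 - 4 * d^2"
        using key[OF yK yK, of m n] by linarith
      also have "\<dots> = 4 * d * (a + b) + 2 * a * a + 2 * b * b" by (simp add: power2_eq_square algebra_simps)
      also have "\<dots> \<le> 4 * d * (a + b) + 2 * a + 2 * b"
        using mult_left_le[of a a] mult_left_le[of b b] a0 b0 by linarith
      also have "\<dots> = (4 * d + 2) * (a + b)" by (simp add: algebra_simps)
      also have "\<dots> \<le> (4 * d + 2) * (2 / (real N + 1))" using ab d0 by (intro mult_left_mono) auto
      also have "\<dots> < e^2"
      proof -
        have "(4 * d + 2) * 2 < e^2 * (real N + 1)" using N e by (simp add: field_simps)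
        thus ?thesis by (simp add: field_simps)
      qed
      finally show ?thesis .
    qed
    show "\<exists>N. \<forall>m\<ge>N. \<forall>n\<ge>N. nm (y m - y n) < e"
      using bnd e by (intro exI[of _ N]) (metis nm_nonneg power_less_imp_less_base less_imp_le)
  qed
  obtain l where l: "\<forall>e>0. \<exists>N. \<forall>n\<ge>N. nm (y n - l) < e" using complete[OF cauchy] by blast
  have lK: "l \<in> K"
  proof -
    have "l \<in> hclosure H K"
    proof (rule hclosureI)
      fix e :: real assume "e > 0"
      then obtain N where "\<forall>n\<ge>N. nm (y n - l) < e" using l by blast
      thus "\<exists>z\<in>K. nm (l - z) < e" using yK nm_commute by (metis order_refl)
    qed
    thus ?thesis using cl by blast
  qed
  have lmin: "\<forall>z\<in>K. nm (x - l) \<le> nm (x - z)"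
  proof
    fix z assume z: "z \<in> K"
    have "nm (x - l) < d + e" if e: "e > 0" for e
    proof -
      obtain N where N: "\<forall>n\<ge>N. nm (y n - l) < e/2" using l e by (meson half_gt_zero)
      obtain M :: nat where M: "2 / e < real M + 1"
        using reals_Archimedean2[of "2 / e"] by (metis add.commute add_strict_increasing zero_less_one less_imp_le)
      define n where "n = max N M"
      have "1 / (real n + 1) \<le> 1 / (real M + 1)" by (simp add: n_def frac_le)
      also have "\<dots> < e / 2" using M e by (simp add: field_simps)
      finally have a: "1 / (real n + 1) < e / 2" .
      have "nm (x - l) \<le> nm (x - y n) + nm (y n - l)" by (rule nm_triangle_diff)
      also have "\<dots> < d + e"
      proof -
        have "nm (y n - l) < e/2" using N by (simp add: n_def)
        thus ?thesis using yd[of n] a by linarith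
      qed
      finally show ?thesis .
    qed
    hence "nm (x - l) \<le> d" by (metis add.commute field_le_epsilon less_imp_le)
    thus "nm (x - l) \<le> nm (x - z)" using dle[OF z] by simp
  qed
  show ?thesis using lK min_orth[OF K lK lmin] by blast
qed

lemma orth_proj_unique:
  assumes K: "hsubspace H K" and y: "y \<in> K" "\<forall>z\<in>K. ip (x - y) z = 0"
  shows "orth_proj H K x = y"
  unfolding orth_proj_def
proof (rule the_equality)
  show "y \<in> K \<and> (\<forall>z\<in>K. ip (x - y) z = 0)" using y by simp
next
  fix y' assume y': "y' \<in> K \<and> (\<forall>z\<in>K. ip (x - y') z = 0)"
  have d: "y' - y \<in> K" using K y y' by (simp add: hsub_diff)
  have "ip (y' - y) (y' - y) = ip (x - y) (y' - y) - ip (x - y') (y' - y)"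
    by (simp add: ip_diff_left[symmetric])
  also have "\<dots> = 0" using y y' d by simp
  finally show "y' = y" by (simp add: ip_self_eq0)
qed

lemma orth_proj_prop:
  assumes K: "hsubspace H K" and cl: "hclosure H K \<subseteq> K"
  shows "orth_proj H K x \<in> K" "\<forall>z\<in>K. ip (x - orth_proj H K x) z = 0"
proof -
  obtain y where "y \<in> K" "\<forall>z\<in>K. ip (x - y) z = 0" using proj_exists[OF K cl] by blast
  moreover then have "orth_proj H K x = y" by (rule orth_proj_unique[OF K])
  ultimately show "orth_proj H K x \<in> K" "\<forall>z\<in>K. ip (x - orth_proj H K x) z = 0" by auto
qed

end

context hsp begin

lemma bop_in: "bop H K C \<Longrightarrow> x \<in> K \<Longrightarrow> C x \<in> K" by (simp add: bop_def)
lemma bop_add: "bop H K C \<Longrightarrow> x \<in> K \<Longrightarrow> y \<in> K \<Longrightarrow> C (x + y) = C x + C y" by (simp add: bop_def)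
lemma bop_sm: "bop H K C \<Longrightarrow> x \<in> K \<Longrightarrow> C (sm c x) = sm c (C x)" by (simp add: bop_def)
lemma bop_out: "bop H K C \<Longrightarrow> x \<notin> K \<Longrightarrow> C x = 0" by (simp add: bop_def)
lemma bop_bound: "bop H K C \<Longrightarrow> \<exists>B. B \<ge> 0 \<and> (\<forall>x\<in>K. nm (C x) \<le> B * nm x)"
proof -
  assume "bop H K C"
  then obtain B where B: "\<forall>x\<in>K. nm (C x) \<le> B * nm x" by (auto simp: bop_def)
  have "\<forall>x\<in>K. nm (C x) \<le> max B 0 * nm x"
    using B by (metis max.cobounded1 mult_right_mono nm_nonneg order_trans)
  thus ?thesis by (intro exI[of _ "max B 0"]) auto
qed
lemma bop_zero: "bop H K C \<Longrightarrow> hsubspace H K \<Longrightarrow> C 0 = 0"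
  by (metis add_cancel_right_right bop_add hsub_0 add_0)
lemma bop_minus: "bop H K C \<Longrightarrow> hsubspace H K \<Longrightarrow> x \<in> K \<Longrightarrow> C (- x) = - C x"
proof -
  assume a: "bop H K C" "x \<in> K"
  have "C (- x) = C (sm (-1) x)" by simp
  also have "\<dots> = sm (-1) (C x)" by (rule bop_sm[OF a])
  finally show ?thesis by simp
qed
lemma bop_diff: "bop H K C \<Longrightarrow> hsubspace H K \<Longrightarrow> x \<in> K \<Longrightarrow> y \<in> K \<Longrightarrow> C (x - y) = C x - C y"
proof -
  assume a: "bop H K C" "hsubspace H K" "x \<in> K" "y \<in> K"
  have "C (x - y) = C (x + - y)" by simp
  also have "\<dots> = C x + C (- y)" using a by (simp add: bop_add hsub_minus del: add_uminus_conv_diff)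
  also have "\<dots> = C x - C y" using a by (simp add: bop_minus)
  finally show ?thesis .
qed
lemma bop_sum: "bop H K C \<Longrightarrow> hsubspace H K \<Longrightarrow> (\<And>i. i \<in> A \<Longrightarrow> f i \<in> K) \<Longrightarrow>
    C (sum f A) = (\<Sum>i\<in>A. C (f i))"
proof (induct A rule: infinite_finite_induct)
  case (infinite A) then show ?case by (simp add: bop_zero)
next
  case empty then show ?case by (simp add: bop_zero)
next
  case (insert a A)
  then show ?case by (simp add: bop_add hsub_sum)
qed

lemma ip_unique_right: "(\<And>x. ip x z1 = ip x z2) \<Longrightarrow> z1 = z2"
proof -
  assume h: "\<And>x. ip x z1 = ip x z2"
  have "ip (z1 - z2) (z1 - z2) = 0" by (simp add: ip_diff_right h)
  thus ?thesis by (simp add: ip_self_eq0)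
qed

lemma riesz:
  assumes add: "\<forall>x y. f (x + y) = f x + f y" and sc: "\<forall>c x. f (sm c x) = c * f x"
    and bd: "\<forall>x. cmod (f x) \<le> B * nm x"
  shows "\<exists>z. \<forall>x. f x = ip x z"
proof (cases "\<forall>x. f x = 0")
  case True then show ?thesis by (intro exI[of _ 0]) simp
next
  case False
  then obtain x0 where x0: "f x0 \<noteq> 0" by blast
  have f0: "f 0 = 0" using add by (metis add_cancel_right_right add_0)
  have fdiff: "f (x - y) = f x - f y" for x y using add by (metis diff_add_cancel eq_diff_eq)
  define K where "K = {x. f x = 0}"
  have K: "hsubspace H K" unfolding hsubspace_def K_def using f0 add sc by simp
  have cl: "hclosure H K \<subseteq> K"
  proof
    fix x assume x: "x \<in> hclosure H K"
    have "cmod (f x) \<le> (\<bar>B\<bar> + 1) * e" if e: "e > 0" for e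
    proof -
      obtain k where k: "k \<in> K" "nm (x - k) < e" using hclosureD[OF x e] by blast
      have "f x = f (x - k)" using k(1) by (simp add: fdiff K_def)
      hence "cmod (f x) \<le> B * nm (x - k)" using bd by simp
      also have "\<dots> \<le> \<bar>B\<bar> * nm (x - k)" by (simp add: mult_right_mono)
      also have "\<dots> \<le> (\<bar>B\<bar> + 1) * e" using k(2) by (intro mult_mono) auto
      finally show ?thesis .
    qed
    hence "cmod (f x) \<le> 0"
    proof -
      assume h: "\<And>e. e > 0 \<Longrightarrow> cmod (f x) \<le> (\<bar>B\<bar> + 1) * e"
      show ?thesis
      proof (rule field_le_epsilon)
        fix e :: real assume e: "e > 0"
        have p: "\<bar>B\<bar> + 1 > 0" by simp
        have "e / (\<bar>B\<bar> + 1) > 0" using e p by simp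
        hence "cmod (f x) \<le> (\<bar>B\<bar> + 1) * (e / (\<bar>B\<bar> + 1))" by (rule h)
        thus "cmod (f x) \<le> 0 + e" using p by simp
      qed
    qed
    thus "x \<in> K" by (simp add: K_def)
  qed
  define p where "p = orth_proj H K x0"
  have pK: "p \<in> K" and port: "\<forall>z\<in>K. ip (x0 - p) z = 0"
    using orth_proj_prop[OF K cl] by (auto simp: p_def)
  define u where "u = x0 - p"
  have fu: "f u = f x0" using pK by (simp add: u_def fdiff K_def)
  have unz: "u \<noteq> 0" using fu x0 f0 by auto
  have uu: "ip u u \<noteq> 0" using unz by (simp add: ip_self_eq0)
  have rep: "f x = ip x (sm (cnj (f u / ip u u)) u)" for x
  proof -
    define k where "k = x - sm (f x / f u) u"
    have "f k = f x - (f x / f u) * f u" by (simp add: k_def fdiff sc)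
    hence kK: "k \<in> K" using fu x0 by (simp add: K_def)
    have "ip k u = cnj (ip u k)" by (rule ip_sym)
    also have "ip u k = 0" using port kK by (simp add: u_def)
    finally have "ip k u = 0" by simp
    hence "ip x u = (f x / f u) * ip u u" by (simp add: k_def ip_diff_left ip_scale_left)
    hence "ip x (sm (cnj (f u / ip u u)) u) = (f u / ip u u) * ((f x / f u) * ip u u)"
      by (simp add: ip_scale_right)
    also have "\<dots> = f x" using uu fu x0 by (simp add: field_simps)
    finally show ?thesis by simp
  qed
  thus ?thesis by blast
qed

lemma adjoint_ex:
  assumes C: "bop H UNIV C"
  shows "\<exists>C'. bop H UNIV C' \<and> (\<forall>x y. ip (C x) y = ip x (C' y))"
proof -
  obtain B where B: "B \<ge> 0" "\<forall>x. nm (C x) \<le> B * nm x" using bop_bound[OF C] by auto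
  have ex: "\<exists>z. \<forall>x. ip (C x) y = ip x z" for y
  proof (rule riesz[where B = "B * nm y"])
    show "\<forall>x1 x2. ip (C (x1 + x2)) y = ip (C x1) y + ip (C x2) y"
      using C by (simp add: bop_add ip_add_left)
    show "\<forall>c x. ip (C (sm c x)) y = c * ip (C x) y"
      using C by (simp add: bop_sm ip_scale_left)
    show "\<forall>x. cmod (ip (C x) y) \<le> B * nm y * nm x"
    proof
      fix x
      have "cmod (ip (C x) y) \<le> nm (C x) * nm y" by (rule cs)
      also have "\<dots> \<le> B * nm x * nm y" using B by (intro mult_right_mono) auto
      finally show "cmod (ip (C x) y) \<le> B * nm y * nm x" by (simp add: mult_ac)
    qed
  qed
  define C' where "C' y = (SOME z. \<forall>x. ip (C x) y = ip x z)" for y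
  have C': "ip (C x) y = ip x (C' y)" for x y
    unfolding C'_def by (rule someI_ex[OF ex[of y], THEN spec])
  have cadd: "C' (y1 + y2) = C' y1 + C' y2" for y1 y2
    by (rule ip_unique_right) (simp add: C'[symmetric] ip_add_right)
  have csm: "C' (sm c y) = sm c (C' y)" for c y
    by (rule ip_unique_right) (simp add: C'[symmetric] ip_scale_right)
  have cb: "nm (C' y) \<le> B * nm y" for y
  proof -
    have "(nm (C' y))^2 = Re (ip (C (C' y)) y)" by (simp add: nm_sq C')
    also have "\<dots> \<le> cmod (ip (C (C' y)) y)" by (rule complex_Re_le_cmod)
    also have "\<dots> \<le> nm (C (C' y)) * nm y" by (rule cs)
    also have "\<dots> \<le> B * nm (C' y) * nm y" using B by (intro mult_right_mono) auto
    finally have h: "nm (C' y) * nm (C' y) \<le> (B * nm y) * nm (C' y)"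
      by (simp add: power2_eq_square mult_ac)
    show "nm (C' y) \<le> B * nm y"
    proof (cases "nm (C' y) = 0")
      case True then show ?thesis using B by simp
    next
      case False then have "nm (C' y) > 0" using nm_nonneg less_le by metis
      then show ?thesis using h by (rule mult_right_le_imp_le[rotated])
    qed
  qed
  have "bop H UNIV C'" unfolding bop_def using cadd csm cb by blast
  thus ?thesis using C' by blast
qed

end

context hsp begin

definition gset :: "'a set \<Rightarrow> 'a set \<Rightarrow> bool" where
  "gset K D0 \<longleftrightarrow> dense_in K D0 \<and> D0 \<subseteq> K \<and> hsubspace H K \<and> hsubspace H D0"

lemma ldag_in: "ldag H D0 X \<Longrightarrow> x \<in> D0 \<Longrightarrow> X x \<in> D0" by (simp add: ldag_def)
lemma ldag_add: "ldag H D0 X \<Longrightarrow> x \<in> D0 \<Longrightarrow> y \<in> D0 \<Longrightarrow> X (x + y) = X x + X y"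
  by (simp add: ldag_def)
lemma ldag_sm: "ldag H D0 X \<Longrightarrow> x \<in> D0 \<Longrightarrow> X (sm c x) = sm c (X x)" by (simp add: ldag_def)
lemma ldag_out: "ldag H D0 X \<Longrightarrow> x \<notin> D0 \<Longrightarrow> X x = 0" by (simp add: ldag_def)
lemma ldag_zero: "ldag H D0 X \<Longrightarrow> hsubspace H D0 \<Longrightarrow> X 0 = 0"
  by (metis add_cancel_right_right ldag_add hsub_0 add_0)
lemma ldag_minus: "ldag H D0 X \<Longrightarrow> x \<in> D0 \<Longrightarrow> X (- x) = - X x"
proof -
  assume a: "ldag H D0 X" "x \<in> D0"
  have "X (- x) = X (sm (-1) x)" by simp
  also have "\<dots> = sm (-1) (X x)" by (rule ldag_sm[OF a])
  finally show ?thesis by simp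
qed
lemma ldag_diff: "ldag H D0 X \<Longrightarrow> hsubspace H D0 \<Longrightarrow> x \<in> D0 \<Longrightarrow> y \<in> D0 \<Longrightarrow> X (x - y) = X x - X y"
proof -
  assume a: "ldag H D0 X" "hsubspace H D0" "x \<in> D0" "y \<in> D0"
  have "X (x - y) = X (x + - y)" by simp
  also have "\<dots> = X x + X (- y)" using a by (simp add: ldag_add hsub_minus del: add_uminus_conv_diff)
  also have "\<dots> = X x - X y" using a by (simp add: ldag_minus)
  finally show ?thesis .
qed

lemma gdag:
  assumes "gset K D0" "ldag H D0 X" "\<eta> \<in> D0"
  shows "dag H D0 X \<eta> \<in> D0" "\<And>\<xi>. \<xi> \<in> D0 \<Longrightarrow> ip (X \<xi>) \<eta> = ip \<xi> (dag H D0 X \<eta>)"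
  using dag_prop[of K D0 X \<eta>] assms unfolding gset_def by auto

lemma gdag_unique:
  assumes "gset K D0" "\<eta> \<in> D0" "\<zeta> \<in> D0" "\<And>\<xi>. \<xi> \<in> D0 \<Longrightarrow> ip (X \<xi>) \<eta> = ip \<xi> \<zeta>"
  shows "dag H D0 X \<eta> = \<zeta>"
  using dag_unique[of K D0 \<eta> \<zeta> X] assms unfolding gset_def by auto

lemma gdag_ldag:
  assumes g: "gset K D0" and X: "ldag H D0 X"
  shows "ldag H D0 (dag H D0 X)" "\<And>\<eta>. \<eta> \<in> D0 \<Longrightarrow> dag H D0 (dag H D0 X) \<eta> = X \<eta>"
proof -
  have sub: "hsubspace H D0" using g by (simp add: gset_def)
  note dg = gdag[OF g X]
  have adj: "ip (dag H D0 X \<xi>) \<eta> = ip \<xi> (X \<eta>)" if "\<xi> \<in> D0" "\<eta> \<in> D0" for \<xi> \<eta>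
    by (metis dg(2) ip_sym that)
  show "ldag H D0 (dag H D0 X)"
    unfolding ldag_def
  proof (intro conjI ballI allI impI)
    fix x assume "x \<in> D0" thus "dag H D0 X x \<in> D0" by (rule dg(1))
  next
    fix x y assume xy: "x \<in> D0" "y \<in> D0"
    show "dag H D0 X (x + y) = dag H D0 X x + dag H D0 X y"
      by (rule gdag_unique[OF g]) (use xy sub dg in \<open>auto simp: hsub_add ip_add_right\<close>)
  next
    fix c x assume x: "x \<in> D0"
    show "dag H D0 X (sm c x) = sm c (dag H D0 X x)"
      by (rule gdag_unique[OF g]) (use x sub dg in \<open>auto simp: hsub_sm ip_scale_right\<close>)
  next
    fix x assume "x \<notin> D0" thus "dag H D0 X x = 0" by (rule dag_out)
  next
    fix \<eta> assume "\<eta> \<in> D0"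
    thus "\<exists>\<zeta>\<in>D0. \<forall>\<xi>\<in>D0. ip (dag H D0 X \<xi>) \<eta> = ip \<xi> \<zeta>"
      using adj ldag_in[OF X] by blast
  qed
  fix \<eta> assume "\<eta> \<in> D0"
  thus "dag H D0 (dag H D0 X) \<eta> = X \<eta>"
    using adj ldag_in[OF X] by (intro gdag_unique[OF g]) auto
qed

lemma gcomp_ldag:
  assumes g: "gset K D0" and X1: "ldag H D0 X1" and X2: "ldag H D0 X2"
  shows "ldag H D0 (X1 \<circ> X2)" "\<And>\<eta>. \<eta> \<in> D0 \<Longrightarrow> dag H D0 (X1 \<circ> X2) \<eta> = dag H D0 X2 (dag H D0 X1 \<eta>)"
proof -
  have sub: "hsubspace H D0" using g by (simp add: gset_def)
  have adj: "ip (X1 (X2 \<xi>)) \<eta> = ip \<xi> (dag H D0 X2 (dag H D0 X1 \<eta>))" if "\<xi> \<in> D0" "\<eta> \<in> D0" for \<xi> \<eta>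
    using gdag[OF g X1] gdag[OF g X2] ldag_in[OF X2] that by metis
  have dd: "dag H D0 X2 (dag H D0 X1 \<eta>) \<in> D0" if "\<eta> \<in> D0" for \<eta>
    using gdag[OF g X1] gdag[OF g X2] that by metis
  show "ldag H D0 (X1 \<circ> X2)"
    unfolding ldag_def
  proof (intro conjI ballI allI impI)
    fix x assume "x \<in> D0" thus "(X1 \<circ> X2) x \<in> D0" by (simp add: ldag_in X1 X2)
  next
    fix x y assume xy: "x \<in> D0" "y \<in> D0"
    show "(X1 \<circ> X2) (x + y) = (X1 \<circ> X2) x + (X1 \<circ> X2) y"
      using ldag_add[OF X2 xy] ldag_add[OF X1 ldag_in[OF X2 xy(1)] ldag_in[OF X2 xy(2)]] by simp
  next
    fix c x assume x: "x \<in> D0"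
    show "(X1 \<circ> X2) (sm c x) = sm c ((X1 \<circ> X2) x)"
      using ldag_sm[OF X2 x] ldag_sm[OF X1 ldag_in[OF X2 x]] by simp
  next
    fix x assume "x \<notin> D0" thus "(X1 \<circ> X2) x = 0"
      by (simp add: ldag_out[OF X2] ldag_zero[OF X1 sub])
  next
    fix \<eta> assume "\<eta> \<in> D0"
    thus "\<exists>\<zeta>\<in>D0. \<forall>\<xi>\<in>D0. ip ((X1 \<circ> X2) \<xi>) \<eta> = ip \<xi> \<zeta>"
      using adj dd by auto
  qed
  fix \<eta> assume "\<eta> \<in> D0"
  thus "dag H D0 (X1 \<circ> X2) \<eta> = dag H D0 X2 (dag H D0 X1 \<eta>)"
    using adj dd by (intro gdag_unique[OF g]) auto
qed

lemma bicommD: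
  "X \<in> bicomm H K D0 N \<Longrightarrow> C \<in> wcomm H K D0 N \<Longrightarrow> \<xi> \<in> D0 \<Longrightarrow> \<eta> \<in> D0 \<Longrightarrow>
    ip (C (X \<xi>)) \<eta> = ip (C \<xi>) (dag H D0 X \<eta>)"
  by (simp add: bicomm_def)
lemma bicomm_ldag: "X \<in> bicomm H K D0 N \<Longrightarrow> ldag H D0 X" by (simp add: bicomm_def)
lemma wcommD:
  "C \<in> wcomm H K D0 N \<Longrightarrow> X \<in> N \<Longrightarrow> \<xi> \<in> D0 \<Longrightarrow> \<eta> \<in> D0 \<Longrightarrow>
    ip (C (X \<xi>)) \<eta> = ip (C \<xi>) (dag H D0 X \<eta>)"
  by (simp add: wcomm_def)
lemma wcomm_bop: "C \<in> wcomm H K D0 N \<Longrightarrow> bop H K C" by (simp add: wcomm_def)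

lemma bicomm_comp:
  assumes g: "gset K D0" and X1: "X1 \<in> bicomm H K D0 N" and X2: "X2 \<in> bicomm H K D0 N"
  shows "X1 \<circ> X2 \<in> bicomm H K D0 N"
proof -
  note l1 = bicomm_ldag[OF X1] and l2 = bicomm_ldag[OF X2]
  note c = gcomp_ldag[OF g l1 l2]
  show ?thesis unfolding bicomm_def
  proof (intro CollectI conjI ballI)
    show "ldag H D0 (X1 \<circ> X2)" by (rule c(1))
  next
    fix C \<xi> \<eta> assume C: "C \<in> wcomm H K D0 N" and \<xi>: "\<xi> \<in> D0" and \<eta>: "\<eta> \<in> D0"
    have "ip (C (X1 (X2 \<xi>))) \<eta> = ip (C (X2 \<xi>)) (dag H D0 X1 \<eta>)"
      by (rule bicommD[OF X1 C ldag_in[OF l2 \<xi>] \<eta>])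
    also have "\<dots> = ip (C \<xi>) (dag H D0 X2 (dag H D0 X1 \<eta>))"
      by (rule bicommD[OF X2 C \<xi> gdag(1)[OF g l1 \<eta>]])
    finally show "ip (C ((X1 \<circ> X2) \<xi>)) \<eta> = ip (C \<xi>) (dag H D0 (X1 \<circ> X2) \<eta>)"
      using c(2)[OF \<eta>] by simp
  qed
qed

lemma bicomm_dag:
  assumes g: "gset K D0" and X: "X \<in> bicomm H K D0 N"
    and adjc: "\<And>C. C \<in> wcomm H K D0 N \<Longrightarrow> \<exists>C'\<in>wcomm H K D0 N. \<forall>a\<in>K. \<forall>b\<in>K. ip (C a) b = ip a (C' b)"
  shows "dag H D0 X \<in> bicomm H K D0 N"
proof -
  note l = bicomm_ldag[OF X]
  note dl = gdag_ldag[OF g l]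
  have sub: "D0 \<subseteq> K" using g by (simp add: gset_def)
  show ?thesis unfolding bicomm_def
  proof (intro CollectI conjI ballI)
    show "ldag H D0 (dag H D0 X)" by (rule dl(1))
  next
    fix C \<xi> \<eta> assume C: "C \<in> wcomm H K D0 N" and \<xi>: "\<xi> \<in> D0" and \<eta>: "\<eta> \<in> D0"
    obtain C' where C': "C' \<in> wcomm H K D0 N" "\<forall>a\<in>K. \<forall>b\<in>K. ip (C a) b = ip a (C' b)"
      using adjc[OF C] by blast
    have W\<xi>: "dag H D0 X \<xi> \<in> D0" by (rule gdag(1)[OF g l \<xi>])
    have X\<eta>: "X \<eta> \<in> D0" by (rule ldag_in[OF l \<eta>])
    have "ip (C (dag H D0 X \<xi>)) \<eta> = ip (dag H D0 X \<xi>) (C' \<eta>)"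
      using C'(2) W\<xi> \<eta> sub by blast
    also have "\<dots> = cnj (ip (C' \<eta>) (dag H D0 X \<xi>))" by (rule ip_sym)
    also have "ip (C' \<eta>) (dag H D0 X \<xi>) = ip (C' (X \<eta>)) \<xi>"
      by (rule bicommD[OF X C'(1) \<eta> \<xi>, symmetric])
    also have "\<dots> = cnj (ip \<xi> (C' (X \<eta>)))" by (rule ip_sym)
    also have "ip \<xi> (C' (X \<eta>)) = ip (C \<xi>) (X \<eta>)"
      using C'(2) \<xi> X\<eta> sub by (metis subsetD)
    finally show "ip (C (dag H D0 X \<xi>)) \<eta> = ip (C \<xi>) (dag H D0 (dag H D0 X) \<eta>)"
      using dl(2)[OF \<eta>] by simp
  qed
qed

lemma wcomm_adj:
  assumes g: "gset K D0" and C: "C \<in> wcomm H K D0 N" and C': "bop H K C'"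
    and adj: "\<forall>a\<in>K. \<forall>b\<in>K. ip (C a) b = ip a (C' b)"
    and Nl: "\<And>A. A \<in> N \<Longrightarrow> ldag H D0 A" and Nd: "\<And>A. A \<in> N \<Longrightarrow> dag H D0 A \<in> N"
  shows "C' \<in> wcomm H K D0 N"
  unfolding wcomm_def
proof (intro CollectI conjI ballI)
  show "bop H K C'" by (rule C')
next
  fix A a b assume A: "A \<in> N" and a: "a \<in> D0" and b: "b \<in> D0"
  have sub: "D0 \<subseteq> K" using g by (simp add: gset_def)
  note lA = Nl[OF A]
  have Ab: "dag H D0 A b \<in> D0" by (rule gdag(1)[OF g lA b])
  have Aa: "A a \<in> D0" by (rule ldag_in[OF lA a])
  have "ip (C' (A a)) b = cnj (ip b (C' (A a)))" by (rule ip_sym)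
  also have "ip b (C' (A a)) = ip (C b) (A a)" using adj b Aa sub by (metis subsetD)
  also have "ip (C b) (A a) = ip (C b) (dag H D0 (dag H D0 A) a)" using gdag_ldag(2)[OF g lA a] by simp
  also have "\<dots> = ip (C (dag H D0 A b)) a"
    by (rule wcommD[OF C Nd[OF A] b a, symmetric])
  also have "\<dots> = ip (dag H D0 A b) (C' a)" using adj Ab a sub by (metis subsetD)
  also have "cnj \<dots> = ip (C' a) (dag H D0 A b)" by (rule ip_sym[symmetric])
  finally show "ip (C' (A a)) b = ip (C' a) (dag H D0 A b)" .
qed

end

context hsp begin
lemma bopI:
  assumes "\<And>x y. f (x + y) = f x + f y" "\<And>c x. f (sm c x) = sm c (f x)" "\<And>x. nm (f x) \<le> B * nm x"
  shows "bop H UNIV f"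
  unfolding bop_def using assms by blast

lemma bopU: "bop H UNIV C \<Longrightarrow> C (x + y) = C x + C y" "bop H UNIV C \<Longrightarrow> C (sm c x) = sm c (C x)"
  "bop H UNIV C \<Longrightarrow> C 0 = 0" "bop H UNIV C \<Longrightarrow> C (x - y) = C x - C y" "bop H UNIV C \<Longrightarrow> C (- x) = - C x"
  by (auto simp: bop_add bop_sm bop_zero bop_diff bop_minus hsub_UNIV)
end

locale setting = hsp H for H :: "('a::ab_group_add) hs" +
  fixes D :: "'a set" and M :: "('a \<Rightarrow> 'a) set" and E :: "'a \<Rightarrow> 'a" and Z :: "'a \<Rightarrow> 'a"
  assumes Dsub: "hsubspace H D" and Ddense: "hclosure H D = UNIV"
    and Mclosed: "closed_ostar H D M"
    and MwD: "\<forall>C\<in>wcomm H UNIV D M. C ` D \<subseteq> D"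
    and Ein: "E \<in> wcomm H UNIV D M" and Eproj: "is_projection H UNIV E"
    and Zdef: "Z = central_support H UNIV D M E"
    and cond_i: "\<forall>X\<in>bicomm H (range E) (E ` D) (reduce E D M). \<exists>Y\<in>bicomm H UNIV D M.
        \<forall>(n::nat) C \<xi> \<eta>. (\<forall>k<n. C k \<in> wcomm H UNIV D M \<and> \<xi> k \<in> D) \<and> \<eta> \<in> D \<longrightarrow>
          hnorm H (\<Sum>k<n. C k (X (E (\<xi> k))))
            \<le> hnorm H (Y ((\<Sum>k<n. C k (E (\<xi> k))) + (\<eta> - Z \<eta>)))"
    and cond_ii: "tclosure H (bicomm H UNIV D M) D
        (module.span (hs_sm H) {C (E \<xi>) | C \<xi>. C \<in> wcomm H UNIV D M \<and> \<xi> \<in> D}) = Z ` D"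
begin

abbreviation "Mw \<equiv> wcomm H UNIV D M"
abbreviation "M2 \<equiv> bicomm H UNIV D M"
abbreviation "ED \<equiv> E ` D"
abbreviation "RE \<equiv> range E"
abbreviation "RM \<equiv> reduce E D M"
abbreviation "S1 \<equiv> bicomm H RE ED RM"

lemma oM: "ostar_alg H D M" using Mclosed by (simp add: closed_ostar_def)
lemma Ml: "A \<in> M \<Longrightarrow> ldag H D A" using oM by (simp add: ostar_alg_def)
lemma Md: "A \<in> M \<Longrightarrow> dag H D A \<in> M" using oM by (simp add: ostar_alg_def)
lemma Mid: "idop D \<in> M" using oM by (simp add: ostar_alg_def)

lemma gD: "gset UNIV D"
  unfolding gset_def dense_in_def using Dsub Ddense hsub_UNIV
  by (auto dest: hclosureD)

lemma Eb: "bop H UNIV E" using Eproj by (simp add: is_projection_def)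
lemma E_idem: "E (E x) = E x" using Eproj by (simp add: is_projection_def)
lemma E_sa: "ip (E x) y = ip x (E y)" using Eproj by (simp add: is_projection_def)
lemmas E_lin = bopU[OF Eb]

lemma RE_iff: "x \<in> RE \<longleftrightarrow> E x = x"
  by (metis E_idem rangeE rangeI)
lemma ED_sub_D: "ED \<subseteq> D" using MwD Ein by blast
lemma ED_sub_RE: "ED \<subseteq> RE" by auto
lemma ED_fix: "x \<in> ED \<Longrightarrow> E x = x" using RE_iff ED_sub_RE by blast
lemma Mw_D: "C \<in> Mw \<Longrightarrow> x \<in> D \<Longrightarrow> C x \<in> D" using MwD by blast

lemma RE_sub: "hsubspace H RE"
  unfolding hsubspace_def RE_iff
  by (auto simp: E_lin RE_iff)

lemma ED_sub: "hsubspace H ED"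
  unfolding hsubspace_def
proof (intro conjI ballI allI)
  show "0 \<in> ED" using hsub_0[OF Dsub] E_lin(3) by (metis imageI)
next
  fix x y assume "x \<in> ED" "y \<in> ED"
  then obtain a b where "a \<in> D" "b \<in> D" "x = E a" "y = E b" by blast
  thus "x + y \<in> ED" using hsub_add[OF Dsub] E_lin(1) by (metis imageI)
next
  fix c x assume "x \<in> ED"
  then obtain a where "a \<in> D" "x = E a" by blast
  thus "sm c x \<in> ED" using hsub_sm[OF Dsub] E_lin(2) by (metis imageI)
qed

lemma ED_dense: "dense_in RE ED"
  unfolding dense_in_def
proof (intro ballI allI impI)
  fix x e assume x: "x \<in> RE" and e: "(e::real) > 0"
  obtain B where B: "B \<ge> 0" "\<forall>x. nm (E x) \<le> B * nm x" using bop_bound[OF Eb] by auto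
  have e': "e / (B + 1) > 0" using B e by simp
  obtain d where d: "d \<in> D" "nm (x - d) < e / (B + 1)" using gD e' x unfolding gset_def dense_in_def by blast
  have "nm (x - E d) = nm (E (x - d))" using x by (simp add: E_lin RE_iff)
  also have "\<dots> \<le> B * nm (x - d)" using B by simp
  also have "\<dots> \<le> (B + 1) * nm (x - d)" by (simp add: mult_right_mono)
  also have "\<dots> < e" using d(2) B by (simp add: field_simps)
  finally show "\<exists>d\<in>ED. nm (x - d) < e" using d(1) by blast
qed

lemma gE: "gset RE ED"
  unfolding gset_def using ED_dense ED_sub_RE RE_sub ED_sub by blast

lemma comm_gen:
  assumes C: "bop H UNIV C" and CD: "\<And>x. x \<in> D \<Longrightarrow> C x \<in> D" and X: "ldag H D X"
    and h: "\<And>\<xi> \<eta>. \<xi> \<in> D \<Longrightarrow> \<eta> \<in> D \<Longrightarrow> ip (C (X \<xi>)) \<eta> = ip (C \<xi>) (dag H D X \<eta>)"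
    and \<xi>: "\<xi> \<in> D"
  shows "C (X \<xi>) = X (C \<xi>)"
proof -
  have "C (X \<xi>) - X (C \<xi>) = 0"
  proof (rule orth_zero)
    show "dense_in UNIV D" using gD by (simp add: gset_def)
    show "C (X \<xi>) - X (C \<xi>) \<in> UNIV" by simp
    show "\<forall>d\<in>D. ip d (C (X \<xi>) - X (C \<xi>)) = 0"
    proof
      fix d assume d: "d \<in> D"
      have "ip (C (X \<xi>) - X (C \<xi>)) d = 0"
        using h[OF \<xi> d] gdag(2)[OF gD X d CD[OF \<xi>]] by (simp add: ip_diff_left)
      thus "ip d (C (X \<xi>) - X (C \<xi>)) = 0" by (metis complex_cnj_zero ip_sym)
    qed
  qed
  thus ?thesis by simp
qed

lemma M_comm: "C \<in> Mw \<Longrightarrow> A \<in> M \<Longrightarrow> \<xi> \<in> D \<Longrightarrow> C (A \<xi>) = A (C \<xi>)"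
  by (rule comm_gen) (auto simp: wcomm_bop Mw_D Ml wcommD)
lemma M2_comm: "C \<in> Mw \<Longrightarrow> Y \<in> M2 \<Longrightarrow> \<xi> \<in> D \<Longrightarrow> C (Y \<xi>) = Y (C \<xi>)"
  by (rule comm_gen) (auto simp: wcomm_bop Mw_D bicomm_ldag bicommD)

lemma Mw_id: "(\<lambda>x. x) \<in> Mw"
  unfolding wcomm_def
proof (intro CollectI conjI ballI)
  show "bop H UNIV (\<lambda>x. x)" by (rule bopI[where B=1]) auto
next
  fix A \<xi> \<eta> assume "A \<in> M" "\<xi> \<in> D" "\<eta> \<in> D"
  thus "ip (A \<xi>) \<eta> = ip \<xi> (dag H D A \<eta>)" using gdag(2)[OF gD Ml] by blast
qed

lemma Mw_comp: assumes C1: "C1 \<in> Mw" and C2: "C2 \<in> Mw" shows "(\<lambda>x. C1 (C2 x)) \<in> Mw"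
  unfolding wcomm_def
proof (intro CollectI conjI ballI)
  obtain B1 where B1: "B1 \<ge> 0" "\<forall>x. nm (C1 x) \<le> B1 * nm x" using bop_bound[OF wcomm_bop[OF C1]] by auto
  obtain B2 where B2: "B2 \<ge> 0" "\<forall>x. nm (C2 x) \<le> B2 * nm x" using bop_bound[OF wcomm_bop[OF C2]] by auto
  show "bop H UNIV (\<lambda>x. C1 (C2 x))"
  proof (rule bopI[where B="B1 * B2"])
    fix x y show "C1 (C2 (x + y)) = C1 (C2 x) + C1 (C2 y)" using wcomm_bop[OF C1] wcomm_bop[OF C2] by (simp add: bopU)
  next
    fix c x show "C1 (C2 (sm c x)) = sm c (C1 (C2 x))" using wcomm_bop[OF C1] wcomm_bop[OF C2] by (simp add: bopU)
  next
    fix x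
    have "nm (C1 (C2 x)) \<le> B1 * nm (C2 x)" using B1 by simp
    also have "\<dots> \<le> B1 * (B2 * nm x)" using B1 B2 by (intro mult_left_mono) auto
    finally show "nm (C1 (C2 x)) \<le> B1 * B2 * nm x" by (simp add: mult_ac)
  qed
next
  fix A \<xi> \<eta> assume A: "A \<in> M" and \<xi>: "\<xi> \<in> D" and \<eta>: "\<eta> \<in> D"
  have "C2 (A \<xi>) = A (C2 \<xi>)" by (rule M_comm[OF C2 A \<xi>])
  thus "ip (C1 (C2 (A \<xi>))) \<eta> = ip (C1 (C2 \<xi>)) (dag H D A \<eta>)"
    using wcommD[OF C1 A Mw_D[OF C2 \<xi>] \<eta>] by simp
qed

lemma Mw_sm: assumes C: "C \<in> Mw" shows "(\<lambda>x. sm c (C x)) \<in> Mw"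
  unfolding wcomm_def
proof (intro CollectI conjI ballI)
  obtain B where B: "B \<ge> 0" "\<forall>x. nm (C x) \<le> B * nm x" using bop_bound[OF wcomm_bop[OF C]] by auto
  show "bop H UNIV (\<lambda>x. sm c (C x))"
  proof (rule bopI[where B="cmod c * B"])
    fix x y show "sm c (C (x + y)) = sm c (C x) + sm c (C y)" using wcomm_bop[OF C] by (simp add: bopU vs.scale_right_distrib)
  next
    fix d x show "sm c (C (sm d x)) = sm d (sm c (C x))" using wcomm_bop[OF C] by (simp add: bopU mult.commute)
  next
    fix x show "nm (sm c (C x)) \<le> cmod c * B * nm x" using B by (simp add: nm_scale mult.assoc mult_left_mono)
  qed
next
  fix A \<xi> \<eta> assume A: "A \<in> M" and \<xi>: "\<xi> \<in> D" and \<eta>: "\<eta> \<in> D"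
  show "ip (sm c (C (A \<xi>))) \<eta> = ip (sm c (C \<xi>)) (dag H D A \<eta>)"
    using wcommD[OF C A \<xi> \<eta>] by (simp add: ip_scale_left)
qed

lemma Mw_neg: assumes C: "C \<in> Mw" shows "(\<lambda>x. - C x) \<in> Mw"
proof -
  have "(\<lambda>x. - C x) = (\<lambda>x. sm (-1) (C x))" by simp
  thus ?thesis using Mw_sm[OF C, of "-1"] by simp
qed

lemma Mw_adj: assumes C: "C \<in> Mw" shows "\<exists>C'\<in>Mw. \<forall>a b. ip (C a) b = ip a (C' b)"
proof -
  obtain C' where C': "bop H UNIV C'" "\<forall>x y. ip (C x) y = ip x (C' y)"
    using adjoint_ex[OF wcomm_bop[OF C]] by blast
  have "C' \<in> Mw" using wcomm_adj[OF gD C C'(1)] C'(2) Ml Md by blast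
  thus ?thesis using C'(2) by blast
qed

lemma Mw_adj': "C \<in> Mw \<Longrightarrow> \<exists>C'\<in>Mw. \<forall>a\<in>UNIV. \<forall>b\<in>UNIV. ip (C a) b = ip a (C' b)"
  using Mw_adj by blast

lemma M2_dag: "Y \<in> M2 \<Longrightarrow> dag H D Y \<in> M2"
  by (rule bicomm_dag[OF gD _ Mw_adj'])

lemma M2_idop: "idop D \<in> M2"
proof -
  have l: "ldag H D (idop D)" unfolding ldag_def idop_def using Dsub
    by (auto simp: hsub_add hsub_sm)
  have dd: "\<eta> \<in> D \<Longrightarrow> dag H D (idop D) \<eta> = \<eta>" for \<eta>
    by (rule gdag_unique[OF gD]) (auto simp: idop_def)
  show ?thesis unfolding bicomm_def using l dd Mw_D by (auto simp: idop_def)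
qed

end

context setting begin

definition redA :: "('a \<Rightarrow> 'a) \<Rightarrow> 'a \<Rightarrow> 'a" where
  "redA A = (\<lambda>x. if x \<in> ED then A (E x) else 0)"

lemma reduce_eq: "reduce E D N = redA ` N" unfolding reduce_def redA_def by (rule refl)
lemma redA_ED: "x \<in> ED \<Longrightarrow> redA A x = A x" unfolding redA_def using ED_fix[of x] by simp

lemma red_ldag:
  assumes A: "ldag H D A" and cE: "\<And>\<xi>. \<xi> \<in> D \<Longrightarrow> E (A \<xi>) = A (E \<xi>)"
    and cEd: "\<And>\<xi>. \<xi> \<in> D \<Longrightarrow> E (dag H D A \<xi>) = dag H D A (E \<xi>)"
  shows "ldag H ED (redA A)" "\<And>b. b \<in> ED \<Longrightarrow> dag H ED (redA A) b = dag H D A b"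
proof -
  have inED: "A a \<in> ED" if a: "a \<in> ED" for a
  proof -
    obtain \<xi> where "\<xi> \<in> D" "a = E \<xi>" using a by blast
    thus ?thesis using cE ldag_in[OF A] by (metis imageI)
  qed
  have dinED: "dag H D A b \<in> ED" if b: "b \<in> ED" for b
  proof -
    obtain \<xi> where "\<xi> \<in> D" "b = E \<xi>" using b by blast
    thus ?thesis using cEd gdag(1)[OF gD A] by (metis imageI)
  qed
  have adj: "ip (redA A a) b = ip a (dag H D A b)" if a: "a \<in> ED" and b: "b \<in> ED" for a b
  proof -
    have aD: "a \<in> D" and bD: "b \<in> D" using a b ED_sub_D by auto
    show ?thesis using redA_ED[OF a] gdag(2)[OF gD A bD aD] by simp
  qed
  show l: "ldag H ED (redA A)"
    unfolding ldag_def
  proof (intro conjI ballI allI impI)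
    fix x assume "x \<in> ED" thus "redA A x \<in> ED" by (simp add: redA_ED inED)
  next
    fix x y assume xy: "x \<in> ED" "y \<in> ED"
    hence "x + y \<in> ED" using ED_sub by (simp add: hsub_add)
    moreover have "x \<in> D" "y \<in> D" using xy ED_sub_D by auto
    ultimately show "redA A (x + y) = redA A x + redA A y" using xy ldag_add[OF A]
      by (simp add: redA_ED)
  next
    fix c x assume x: "x \<in> ED"
    hence "sm c x \<in> ED" using ED_sub by (simp add: hsub_sm)
    moreover have "x \<in> D" using x ED_sub_D by auto
    ultimately show "redA A (sm c x) = sm c (redA A x)" using x ldag_sm[OF A]
      by (simp add: redA_ED)
  next
    fix x assume "x \<notin> ED" thus "redA A x = 0" by (simp add: redA_def)
  next
    fix \<eta> assume "\<eta> \<in> ED" thus "\<exists>\<zeta>\<in>ED. \<forall>\<xi>\<in>ED. ip (redA A \<xi>) \<eta> = ip \<xi> \<zeta>"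
      using adj dinED by blast
  qed
  fix b assume "b \<in> ED"
  thus "dag H ED (redA A) b = dag H D A b"
    using adj dinED by (intro gdag_unique[OF gE]) auto
qed

lemma M_red: assumes A: "A \<in> M"
  shows "ldag H ED (redA A)" "\<And>b. b \<in> ED \<Longrightarrow> dag H ED (redA A) b = dag H D A b"
  using red_ldag[OF Ml[OF A] M_comm[OF Ein A] M_comm[OF Ein Md[OF A]]] by auto

lemma M2_red: assumes Y: "Y \<in> M2"
  shows "ldag H ED (redA Y)" "\<And>b. b \<in> ED \<Longrightarrow> dag H ED (redA Y) b = dag H D Y b"
  using red_ldag[OF bicomm_ldag[OF Y] M2_comm[OF Ein Y] M2_comm[OF Ein M2_dag[OF Y]]] by auto

lemma RM_dag: assumes A: "A \<in> M" shows "dag H ED (redA A) = redA (dag H D A)"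
proof
  fix x show "dag H ED (redA A) x = redA (dag H D A) x"
    by (cases "x \<in> ED") (simp_all add: M_red(2)[OF A] redA_ED dag_out, simp add: redA_def)
qed

lemma RM_l: "B \<in> RM \<Longrightarrow> ldag H ED B" using M_red by (auto simp: reduce_eq)
lemma RM_d: "B \<in> RM \<Longrightarrow> dag H ED B \<in> RM" using RM_dag Md by (auto simp: reduce_eq)
lemma RM_S1: "B \<in> RM \<Longrightarrow> B \<in> S1"
  unfolding bicomm_def using RM_l wcommD by blast

lemma CE_bop: assumes C: "bop H RE C" shows "bop H UNIV (\<lambda>x. C (E x))"
proof -
  obtain B where B: "B \<ge> 0" "\<forall>x\<in>RE. nm (C x) \<le> B * nm x" using bop_bound[OF C] by auto
  obtain BE where BE: "BE \<ge> 0" "\<forall>x. nm (E x) \<le> BE * nm x" using bop_bound[OF Eb] by auto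
  show ?thesis
  proof (rule bopI[where B="B * BE"])
    fix x y show "C (E (x + y)) = C (E x) + C (E y)" using bop_add[OF C] by (simp add: E_lin)
  next
    fix c x show "C (E (sm c x)) = sm c (C (E x))" using bop_sm[OF C] by (simp add: E_lin)
  next
    fix x
    have "nm (C (E x)) \<le> B * nm (E x)" using B by simp
    also have "\<dots> \<le> B * (BE * nm x)" using B BE by (intro mult_left_mono) auto
    finally show "nm (C (E x)) \<le> B * BE * nm x" by (simp add: mult_ac)
  qed
qed

lemma wE_adj:
  assumes C: "C \<in> wcomm H RE ED RM"
  shows "\<exists>C'\<in>wcomm H RE ED RM. \<forall>a\<in>RE. \<forall>b\<in>RE. ip (C a) b = ip a (C' b)"
proof -
  note Cb = wcomm_bop[OF C]
  obtain Cs where Cs: "bop H UNIV Cs" "\<forall>x y. ip (C (E x)) y = ip x (Cs y)"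
    using adjoint_ex[OF CE_bop[OF Cb]] by blast
  define C' where "C' = (\<lambda>x. if x \<in> RE then E (Cs x) else 0)"
  obtain B where B: "B \<ge> 0" "\<forall>x. nm (Cs x) \<le> B * nm x" using bop_bound[OF Cs(1)] by auto
  obtain BE where BE: "BE \<ge> 0" "\<forall>x. nm (E x) \<le> BE * nm x" using bop_bound[OF Eb] by auto
  have bC': "bop H RE C'"
    unfolding bop_def
  proof (intro conjI ballI allI impI)
    fix x assume "x \<in> RE" thus "C' x \<in> RE" by (simp add: C'_def)
  next
    fix x y assume "x \<in> RE" "y \<in> RE"
    moreover hence "x + y \<in> RE" using RE_sub by (simp add: hsub_add)
    ultimately show "C' (x + y) = C' x + C' y" by (simp add: C'_def bopU[OF Cs(1)] E_lin)
  next
    fix c x assume "x \<in> RE"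
    moreover hence "sm c x \<in> RE" using RE_sub by (simp add: hsub_sm)
    ultimately show "C' (sm c x) = sm c (C' x)" by (simp add: C'_def bopU[OF Cs(1)] E_lin)
  next
    show "\<exists>B. \<forall>x\<in>RE. nm (C' x) \<le> B * nm x"
    proof (intro exI ballI)
      fix x assume "x \<in> RE"
      have "nm (E (Cs x)) \<le> BE * nm (Cs x)" using BE by simp
      also have "\<dots> \<le> BE * (B * nm x)" using B BE by (intro mult_left_mono) auto
      finally show "nm (C' x) \<le> BE * B * nm x" using \<open>x \<in> RE\<close> by (simp add: C'_def mult_ac)
    qed
  next
    fix x assume "x \<notin> RE" thus "C' x = 0" by (simp add: C'_def)
  qed
  have adj: "\<forall>a\<in>RE. \<forall>b\<in>RE. ip (C a) b = ip a (C' b)"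
  proof (intro ballI)
    fix a b assume a: "a \<in> RE" and b: "b \<in> RE"
    have "ip (C a) b = ip (C (E a)) b" using a by (simp add: RE_iff)
    also have "\<dots> = ip a (Cs b)" using Cs(2) by simp
    also have "\<dots> = ip (E a) (Cs b)" using a by (simp add: RE_iff)
    also have "\<dots> = ip a (E (Cs b))" by (rule E_sa)
    finally show "ip (C a) b = ip a (C' b)" using b by (simp add: C'_def)
  qed
  have "C' \<in> wcomm H RE ED RM" by (rule wcomm_adj[OF gE C bC' adj RM_l RM_d])
  thus ?thesis using adj by blast
qed

lemma S1_comp: "X1 \<in> S1 \<Longrightarrow> X2 \<in> S1 \<Longrightarrow> X1 \<circ> X2 \<in> S1"
  by (rule bicomm_comp[OF gE])
lemma S1_dag: "X \<in> S1 \<Longrightarrow> dag H ED X \<in> S1"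
  by (rule bicomm_dag[OF gE _ wE_adj])

definition TE :: "('a \<Rightarrow> 'a) \<Rightarrow> 'a \<Rightarrow> 'a" where
  "TE T = (\<lambda>x. if x \<in> RE then E (T x) else 0)"

lemma TE_w: assumes T: "T \<in> Mw" shows "TE T \<in> wcomm H RE ED RM"
  unfolding wcomm_def
proof (intro CollectI conjI ballI)
  note Tb = wcomm_bop[OF T]
  obtain B where B: "B \<ge> 0" "\<forall>x. nm (T x) \<le> B * nm x" using bop_bound[OF Tb] by auto
  obtain BE where BE: "BE \<ge> 0" "\<forall>x. nm (E x) \<le> BE * nm x" using bop_bound[OF Eb] by auto
  show "bop H RE (TE T)"
    unfolding bop_def
  proof (intro conjI ballI allI impI)
    fix x assume "x \<in> RE" thus "TE T x \<in> RE" by (simp add: TE_def)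
  next
    fix x y assume "x \<in> RE" "y \<in> RE"
    moreover hence "x + y \<in> RE" using RE_sub by (simp add: hsub_add)
    ultimately show "TE T (x + y) = TE T x + TE T y" by (simp add: TE_def bopU[OF Tb] E_lin)
  next
    fix c x assume "x \<in> RE"
    moreover hence "sm c x \<in> RE" using RE_sub by (simp add: hsub_sm)
    ultimately show "TE T (sm c x) = sm c (TE T x)" by (simp add: TE_def bopU[OF Tb] E_lin)
  next
    show "\<exists>B. \<forall>x\<in>RE. nm (TE T x) \<le> B * nm x"
    proof (intro exI ballI)
      fix x assume "x \<in> RE"
      have "nm (E (T x)) \<le> BE * nm (T x)" using BE by simp
      also have "\<dots> \<le> BE * (B * nm x)" using B BE by (intro mult_left_mono) auto
      finally show "nm (TE T x) \<le> BE * B * nm x" using \<open>x \<in> RE\<close> by (simp add: TE_def mult_ac)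
    qed
  next
    fix x assume "x \<notin> RE" thus "TE T x = 0" by (simp add: TE_def)
  qed
next
  fix X a b assume X: "X \<in> RM" and a: "a \<in> ED" and b: "b \<in> ED"
  obtain A where A: "A \<in> M" "X = redA A" using X by (auto simp: reduce_eq)
  have aD: "a \<in> D" and bD: "b \<in> D" using a b ED_sub_D by auto
  have Xa: "X a = A a" using A a by (simp add: redA_ED)
  have AaE: "A a \<in> ED" using ldag_in[OF M_red(1)[OF A(1)] a] A a by (simp add: redA_ED)
  have dd: "dag H ED X b = dag H D A b" using M_red(2)[OF A(1) b] A by simp
  have dED: "dag H D A b \<in> ED" using gdag(1)[OF gE M_red(1)[OF A(1)] b] dd A by simp
  have "ip (TE T (X a)) b = ip (E (T (A a))) b" using Xa AaE ED_sub_RE by (auto simp: TE_def)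
  also have "\<dots> = ip (T (A a)) b" using E_sa ED_fix[OF b] by metis
  also have "\<dots> = ip (T a) (dag H D A b)" by (rule wcommD[OF T A(1) aD bD])
  also have "\<dots> = ip (E (T a)) (dag H D A b)" using E_sa ED_fix[OF dED] by metis
  also have "\<dots> = ip (TE T a) (dag H ED X b)" using a ED_sub_RE dd by (auto simp: TE_def)
  finally show "ip (TE T (X a)) b = ip (TE T a) (dag H ED X b)" .
qed

lemma CE_Mw: assumes C: "C \<in> wcomm H RE ED RM" shows "(\<lambda>x. C (E x)) \<in> Mw"
  unfolding wcomm_def
proof (intro CollectI conjI ballI)
  show "bop H UNIV (\<lambda>x. C (E x))" by (rule CE_bop[OF wcomm_bop[OF C]])
next
  fix A \<xi> \<eta> assume A: "A \<in> M" and \<xi>: "\<xi> \<in> D" and \<eta>: "\<eta> \<in> D"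
  have RA: "redA A \<in> RM" using A by (auto simp: reduce_eq)
  have E\<xi>: "E \<xi> \<in> ED" and E\<eta>: "E \<eta> \<in> ED" using \<xi> \<eta> by auto
  have inRE: "C x \<in> RE" for x
    using wcomm_bop[OF C] by (metis bop_in bop_out RE_iff E_lin(3))
  have "ip (C (E (A \<xi>))) \<eta> = ip (C (redA A (E \<xi>))) \<eta>"
    using M_comm[OF Ein A \<xi>] E\<xi> by (simp add: redA_ED)
  also have "\<dots> = ip (C (redA A (E \<xi>))) (E \<eta>)" using inRE RE_iff E_sa by metis
  also have "\<dots> = ip (C (E \<xi>)) (dag H ED (redA A) (E \<eta>))" by (rule wcommD[OF C RA E\<xi> E\<eta>])
  also have "\<dots> = ip (C (E \<xi>)) (dag H D A (E \<eta>))" using M_red(2)[OF A E\<eta>] by simp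
  also have "\<dots> = ip (C (E \<xi>)) (E (dag H D A \<eta>))" using M_comm[OF Ein Md[OF A] \<eta>] by simp
  also have "\<dots> = ip (C (E \<xi>)) (dag H D A \<eta>)" using inRE RE_iff E_sa by metis
  finally show "ip (C (E (A \<xi>))) \<eta> = ip (C (E \<xi>)) (dag H D A \<eta>)" .
qed

lemma easy: assumes Y: "Y \<in> M2" shows "redA Y \<in> S1"
  unfolding bicomm_def
proof (intro CollectI conjI ballI)
  show "ldag H ED (redA Y)" by (rule M2_red(1)[OF Y])
next
  fix C a b assume C: "C \<in> wcomm H RE ED RM" and a: "a \<in> ED" and b: "b \<in> ED"
  have aD: "a \<in> D" and bD: "b \<in> D" using a b ED_sub_D by auto
  have Ya: "redA Y a = Y a" using a by (simp add: redA_ED)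
  have YaE: "Y a \<in> ED" using ldag_in[OF M2_red(1)[OF Y] a] Ya by simp
  have "ip (C (redA Y a)) b = ip (C (E (Y a))) b" using Ya ED_fix[OF YaE] by simp
  also have "\<dots> = ip (C (E a)) (dag H D Y b)" by (rule bicommD[OF Y CE_Mw[OF C] aD bD])
  also have "\<dots> = ip (C a) (dag H ED (redA Y) b)" using ED_fix[OF a] M2_red(2)[OF Y b] by simp
  finally show "ip (C (redA Y a)) b = ip (C a) (dag H ED (redA Y) b)" .
qed

end

context setting begin

abbreviation "GG \<equiv> {C (E x) | C x. C \<in> Mw \<and> x \<in> UNIV}"
abbreviation "SG \<equiv> vs.span GG"
abbreviation "Kz \<equiv> hclosure H SG"
abbreviation "G' \<equiv> {C (E \<xi>) | C \<xi>. C \<in> Mw \<and> \<xi> \<in> D}"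
abbreviation "TC \<equiv> tclosure H M2 D (vs.span G')"

lemma Zeq: "Z = orth_proj H Kz" using Zdef by (simp add: central_support_def)

lemma sub_hsub: "vs.subspace S \<Longrightarrow> hsubspace H S"
  unfolding vs.subspace_def hsubspace_def by auto
lemma hsub_sub: "hsubspace H S \<Longrightarrow> vs.subspace S"
  unfolding vs.subspace_def hsubspace_def by auto

lemma SG_sub: "hsubspace H SG" by (rule sub_hsub) simp
lemma Kz_sub: "hsubspace H Kz" by (rule hclosure_subspace[OF SG_sub])
lemma Kz_cl: "hclosure H Kz \<subseteq> Kz" by (rule hclosure_closed)

lemma Zp: "Z x \<in> Kz" "\<And>z. z \<in> Kz \<Longrightarrow> ip (x - Z x) z = 0"
  using orth_proj_prop[OF Kz_sub Kz_cl, of x] by (auto simp: Zeq)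

lemma Z_uniq: "y \<in> Kz \<Longrightarrow> (\<And>z. z \<in> Kz \<Longrightarrow> ip (x - y) z = 0) \<Longrightarrow> Z x = y"
  unfolding Zeq by (rule orth_proj_unique[OF Kz_sub]) auto

lemma Z_add: "Z (x + y) = Z x + Z y"
proof (rule Z_uniq)
  show "Z x + Z y \<in> Kz" using Zp Kz_sub by (simp add: hsub_add)
  fix z assume z: "z \<in> Kz"
  have eq: "x + y - (Z x + Z y) = (x - Z x) + (y - Z y)" by (simp add: algebra_simps)
  show "ip (x + y - (Z x + Z y)) z = 0" unfolding eq using Zp(2)[OF z, of x] Zp(2)[OF z, of y] by (simp add: ip_add_left)
qed

lemma Z_sm: "Z (sm c x) = sm c (Z x)"
proof (rule Z_uniq)
  show "sm c (Z x) \<in> Kz" using Zp Kz_sub by (simp add: hsub_sm)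
  fix z assume z: "z \<in> Kz"
  have eq: "sm c x - sm c (Z x) = sm c (x - Z x)" by (simp add: vs.scale_right_diff_distrib)
  show "ip (sm c x - sm c (Z x)) z = 0" unfolding eq using Zp(2)[OF z, of x] by (simp add: ip_scale_left)
qed

lemma Z_fix: "x \<in> Kz \<Longrightarrow> Z x = x"
  by (rule Z_uniq) auto

lemma Z_0: "Z 0 = 0" using Z_fix hsub_0[OF Kz_sub] by blast

lemma Z_diff: "Z (x - y) = Z x - Z y"
proof -
  have "Z x = Z ((x - y) + y)" by simp
  also have "\<dots> = Z (x - y) + Z y" by (rule Z_add)
  finally have "Z (x - y) + Z y = Z x" by simp
  thus ?thesis by (simp add: eq_diff_eq)
qed

lemma Mw_G: "C \<in> Mw \<Longrightarrow> g \<in> GG \<Longrightarrow> C g \<in> GG"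
proof -
  assume C: "C \<in> Mw" and "g \<in> GG"
  then obtain C' x where C': "C' \<in> Mw" "g = C' (E x)" by blast
  have "(\<lambda>y. C (C' y)) \<in> Mw" by (rule Mw_comp[OF C C'(1)])
  thus "C g \<in> GG" unfolding mem_Collect_eq using C'(2)
    by (intro exI[of _ "\<lambda>y. C (C' y)"] exI[of _ x]) simp
qed

lemma Mw_SG: assumes C: "C \<in> Mw" and s: "s \<in> SG" shows "C s \<in> SG"
proof -
  note Cb = wcomm_bop[OF C]
  have "SG \<subseteq> {x. C x \<in> SG}"
  proof (rule vs.span_minimal)
    show "GG \<subseteq> {x. C x \<in> SG}" using Mw_G[OF C] vs.span_base by blast
    show "vs.subspace {x. C x \<in> SG}"
      unfolding vs.subspace_def
      using bopU[OF Cb] vs.span_zero vs.span_add vs.span_scale by simp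
  qed
  thus ?thesis using s by blast
qed

lemma Mw_Kz: assumes C: "C \<in> Mw" and x: "x \<in> Kz" shows "C x \<in> Kz"
proof (rule hclosureI)
  fix e :: real assume e: "e > 0"
  note Cb = wcomm_bop[OF C]
  obtain B where B: "B \<ge> 0" "\<forall>x. nm (C x) \<le> B * nm x" using bop_bound[OF Cb] by auto
  have e': "e / (B + 1) > 0" using e B by simp
  obtain s where s: "s \<in> SG" "nm (x - s) < e / (B + 1)" using hclosureD[OF x e'] by blast
  have "nm (C x - C s) = nm (C (x - s))" by (simp add: bopU[OF Cb])
  also have "\<dots> \<le> B * nm (x - s)" using B by simp
  also have "\<dots> \<le> (B + 1) * nm (x - s)" by (simp add: mult_right_mono)
  also have "\<dots> < e" using s(2) B by (simp add: field_simps)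
  finally show "\<exists>y\<in>SG. nm (C x - y) < e" using Mw_SG[OF C s(1)] by blast
qed

lemma Z_comm: assumes C: "C \<in> Mw" shows "Z (C x) = C (Z x)"
proof (rule Z_uniq)
  show "C (Z x) \<in> Kz" by (rule Mw_Kz[OF C Zp(1)])
  fix z assume z: "z \<in> Kz"
  obtain C' where C': "C' \<in> Mw" "\<forall>a b. ip (C a) b = ip a (C' b)" using Mw_adj[OF C] by blast
  have "C x - C (Z x) = C (x - Z x)" by (simp add: bopU[OF wcomm_bop[OF C]])
  hence "ip (C x - C (Z x)) z = ip (x - Z x) (C' z)" using C'(2) by simp
  also have "\<dots> = 0" by (rule Zp(2)[OF Mw_Kz[OF C'(1) z]])
  finally show "ip (C x - C (Z x)) z = 0" .
qed

lemma E_GG: "E x \<in> GG" unfolding mem_Collect_eq using Mw_id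
  by (intro exI[of _ "\<lambda>y. y"] exI[of _ x]) simp
lemma E_Kz: "E x \<in> Kz" using E_GG vs.span_base hclosure_sup by blast
lemma Z_E: "Z (E x) = E x" by (rule Z_fix[OF E_Kz])

lemma G'_GG: "G' \<subseteq> GG"
proof
  fix v assume "v \<in> G'"
  then obtain C \<xi> where "v = C (E \<xi>)" "C \<in> Mw" by blast
  thus "v \<in> GG" unfolding mem_Collect_eq by (intro exI[of _ C] exI[of _ \<xi>]) simp
qed

lemma TC_D: "TC \<subseteq> D" unfolding tclosure_def by blast
lemma Z_TC: "d \<in> D \<Longrightarrow> Z d \<in> TC" using cond_ii by blast
lemma Z_D: "d \<in> D \<Longrightarrow> Z d \<in> D" using Z_TC TC_D by blast

lemma TC_approx:
  assumes w: "w \<in> TC" and F: "finite F" "F \<subseteq> M2" and e: "e > 0"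
  shows "\<exists>y\<in>vs.span G'. \<forall>Y\<in>F. nm (Y (w - y)) < e"
  using w F e unfolding tclosure_def by blast

end

context setting begin

definition valid :: "(('a \<Rightarrow> 'a) \<times> 'a) list \<Rightarrow> bool" where
  "valid L \<longleftrightarrow> (\<forall>p\<in>set L. fst p \<in> Mw \<and> snd p \<in> D)"
definition val :: "(('a \<Rightarrow> 'a) \<times> 'a) list \<Rightarrow> 'a" where
  "val L = sum_list (map (\<lambda>p. fst p (E (snd p))) L)"
definition xe :: "('a \<Rightarrow> 'a) \<Rightarrow> (('a \<Rightarrow> 'a) \<times> 'a) list \<Rightarrow> 'a" where
  "xe X L = sum_list (map (\<lambda>p. fst p (X (E (snd p)))) L)"
definition negL :: "(('a \<Rightarrow> 'a) \<times> 'a) list \<Rightarrow> (('a \<Rightarrow> 'a) \<times> 'a) list" where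
  "negL L = map (\<lambda>p. (\<lambda>x. - fst p x, snd p)) L"
definition smL :: "complex \<Rightarrow> (('a \<Rightarrow> 'a) \<times> 'a) list \<Rightarrow> (('a \<Rightarrow> 'a) \<times> 'a) list" where
  "smL c L = map (\<lambda>p. (\<lambda>x. sm c (fst p x), snd p)) L"
definition cL :: "('a \<Rightarrow> 'a) \<Rightarrow> (('a \<Rightarrow> 'a) \<times> 'a) list \<Rightarrow> (('a \<Rightarrow> 'a) \<times> 'a) list" where
  "cL C L = map (\<lambda>p. (\<lambda>x. C (fst p x), snd p)) L"

lemma valid_Nil[simp]: "valid []" by (simp add: valid_def)
lemma valid_Cons[simp]: "valid (p # L) \<longleftrightarrow> fst p \<in> Mw \<and> snd p \<in> D \<and> valid L" by (simp add: valid_def)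
lemma valid_append[simp]: "valid (L1 @ L2) \<longleftrightarrow> valid L1 \<and> valid L2" by (auto simp: valid_def)
lemma valid_negL: "valid L \<Longrightarrow> valid (negL L)" by (induct L) (auto simp: negL_def Mw_neg)
lemma valid_smL: "valid L \<Longrightarrow> valid (smL c L)" by (induct L) (auto simp: smL_def Mw_sm)
lemma valid_cL: "C \<in> Mw \<Longrightarrow> valid L \<Longrightarrow> valid (cL C L)" by (induct L) (auto simp: cL_def Mw_comp)

lemma val_Nil[simp]: "val [] = 0" by (simp add: val_def)
lemma val_Cons[simp]: "val (p # L) = fst p (E (snd p)) + val L" by (simp add: val_def)
lemma val_append[simp]: "val (L1 @ L2) = val L1 + val L2" by (simp add: val_def)
lemma xe_Nil[simp]: "xe X [] = 0" by (simp add: xe_def)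
lemma xe_Cons[simp]: "xe X (p # L) = fst p (X (E (snd p))) + xe X L" by (simp add: xe_def)
lemma xe_append[simp]: "xe X (L1 @ L2) = xe X L1 + xe X L2" by (simp add: xe_def)

lemma val_negL: "val (negL L) = - val L" by (induct L) (simp_all add: negL_def)
lemma xe_negL: "xe X (negL L) = - xe X L" by (induct L) (simp_all add: negL_def)
lemma val_smL: "val (smL c L) = sm c (val L)" by (induct L) (simp_all add: smL_def vs.scale_right_distrib)
lemma xe_smL: "xe X (smL c L) = sm c (xe X L)" by (induct L) (simp_all add: smL_def vs.scale_right_distrib)
lemma val_cL: "C \<in> Mw \<Longrightarrow> val (cL C L) = C (val L)"
  by (induct L) (simp_all add: cL_def bopU[OF wcomm_bop])
lemma xe_cL: "C \<in> Mw \<Longrightarrow> xe X (cL C L) = C (xe X L)"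
  by (induct L) (simp_all add: cL_def bopU[OF wcomm_bop])

lemma val_diff: "val L1 - val L2 = val (L1 @ negL L2)" by (simp add: val_negL)
lemma xe_diff: "xe X L1 - xe X L2 = xe X (L1 @ negL L2)" by (simp add: xe_negL)

lemma val_D: "valid L \<Longrightarrow> val L \<in> D"
proof (induct L)
  case Nil then show ?case by (simp add: hsub_0[OF Dsub])
next
  case (Cons p L)
  have "E (snd p) \<in> D" using Cons.prems ED_sub_D by auto
  hence "fst p (E (snd p)) \<in> D" using Cons.prems Mw_D by simp
  thus ?case using Cons by (simp add: hsub_add[OF Dsub])
qed

lemma S1_ED: "X \<in> S1 \<Longrightarrow> \<xi> \<in> D \<Longrightarrow> X (E \<xi>) \<in> ED"
  using ldag_in[OF bicomm_ldag] by blast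

lemma xe_D: "X \<in> S1 \<Longrightarrow> valid L \<Longrightarrow> xe X L \<in> D"
proof (induct L)
  case Nil then show ?case by (simp add: hsub_0[OF Dsub])
next
  case (Cons p L)
  have "X (E (snd p)) \<in> D" using Cons.prems S1_ED ED_sub_D by auto
  hence "fst p (X (E (snd p))) \<in> D" using Cons.prems Mw_D by simp
  thus ?case using Cons by (simp add: hsub_add[OF Dsub])
qed

lemma val_span: "valid L \<Longrightarrow> val L \<in> vs.span G'"
proof (induct L)
  case Nil then show ?case by (simp add: vs.span_zero)
next
  case (Cons p L)
  have "fst p (E (snd p)) \<in> G'" using Cons.prems unfolding mem_Collect_eq
    by (intro exI[of _ "fst p"] exI[of _ "snd p"]) simp
  thus ?case using Cons by (simp add: vs.span_add vs.span_base)
qed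

lemma span_val: assumes y: "y \<in> vs.span G'" shows "\<exists>L. valid L \<and> val L = y"
proof -
  have "vs.span G' \<subseteq> {y. \<exists>L. valid L \<and> val L = y}"
  proof (rule vs.span_minimal)
    show "G' \<subseteq> {y. \<exists>L. valid L \<and> val L = y}"
    proof
      fix v assume "v \<in> G'"
      then obtain C \<xi> where v: "v = C (E \<xi>)" "C \<in> Mw" "\<xi> \<in> D" by blast
      hence "valid [(C, \<xi>)] \<and> val [(C, \<xi>)] = v" by simp
      thus "v \<in> {y. \<exists>L. valid L \<and> val L = y}" by blast
    qed
    show "vs.subspace {y. \<exists>L. valid L \<and> val L = y}"
      unfolding vs.subspace_def
    proof (intro conjI ballI allI)
      show "0 \<in> {y. \<exists>L. valid L \<and> val L = y}" by (intro CollectI exI[of _ "[]"]) simp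
    next
      fix x y assume "x \<in> {y. \<exists>L. valid L \<and> val L = y}" "y \<in> {y. \<exists>L. valid L \<and> val L = y}"
      then obtain L1 L2 where "valid L1" "val L1 = x" "valid L2" "val L2 = y" by blast
      thus "x + y \<in> {y. \<exists>L. valid L \<and> val L = y}" by (intro CollectI exI[of _ "L1 @ L2"]) simp
    next
      fix c x assume "x \<in> {y. \<exists>L. valid L \<and> val L = y}"
      then obtain L where "valid L" "val L = x" by blast
      thus "sm c x \<in> {y. \<exists>L. valid L \<and> val L = y}"
        by (intro CollectI exI[of _ "smL c L"]) (simp add: valid_smL val_smL)
    qed
  qed
  hence "y \<in> {y. \<exists>L. valid L \<and> val L = y}" using y by (rule subsetD)
  thus ?thesis by simp
qed

lemma xe_SG: "X \<in> S1 \<Longrightarrow> valid L \<Longrightarrow> xe X L \<in> SG"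
proof (induct L)
  case Nil then show ?case by (simp add: vs.span_zero)
next
  case (Cons p L)
  have "X (E (snd p)) \<in> ED" using Cons.prems S1_ED by auto
  hence "fst p (X (E (snd p))) = fst p (E (X (E (snd p))))" using ED_fix[of "X (E (snd p))"] by simp
  moreover have "fst p (E (X (E (snd p)))) \<in> GG" using Cons.prems unfolding mem_Collect_eq
    by (intro exI[of _ "fst p"] exI[of _ "X (E (snd p))"]) simp
  ultimately show ?case using Cons by (simp add: vs.span_add vs.span_base)
qed

definition dom :: "('a \<Rightarrow> 'a) \<Rightarrow> ('a \<Rightarrow> 'a) \<Rightarrow> bool" where
  "dom X Y \<longleftrightarrow> Y \<in> M2 \<and> (\<forall>L. valid L \<longrightarrow> nm (xe X L) \<le> nm (Y (val L)))"

lemma dom_ex: assumes X: "X \<in> S1" shows "\<exists>Y. dom X Y"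
proof -
  obtain Y where Y: "Y \<in> M2" and h: "\<forall>(n::nat) C \<xi> \<eta>. (\<forall>k<n. C k \<in> Mw \<and> \<xi> k \<in> D) \<and> \<eta> \<in> D \<longrightarrow>
          nm (\<Sum>k<n. C k (X (E (\<xi> k)))) \<le> nm (Y ((\<Sum>k<n. C k (E (\<xi> k))) + (\<eta> - Z \<eta>)))"
    using bspec[OF cond_i X] by (elim bexE)
  have "nm (xe X L) \<le> nm (Y (val L))" if L: "valid L" for L
  proof -
    have a: "\<forall>k<length L. fst (L ! k) \<in> Mw \<and> snd (L ! k) \<in> D" using L by (auto simp: valid_def)
    have "nm (\<Sum>k<length L. fst (L ! k) (X (E (snd (L ! k)))))
      \<le> nm (Y ((\<Sum>k<length L. fst (L ! k) (E (snd (L ! k)))) + (0 - Z 0)))"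
      using h[rule_format, of "length L" "\<lambda>k. fst (L ! k)" "\<lambda>k. snd (L ! k)" 0] a hsub_0[OF Dsub]
      by simp
    moreover have "xe X L = (\<Sum>k<length L. fst (L ! k) (X (E (snd (L ! k)))))"
      unfolding xe_def by (simp add: sum_list_sum_nth atLeast0LessThan)
    moreover have "val L = (\<Sum>k<length L. fst (L ! k) (E (snd (L ! k))))"
      unfolding val_def by (simp add: sum_list_sum_nth atLeast0LessThan)
    ultimately show ?thesis by (simp add: Z_0)
  qed
  thus ?thesis using Y unfolding dom_def by blast
qed

lemma M2_l: "Y \<in> M2 \<Longrightarrow> ldag H D Y" by (rule bicomm_ldag)

lemma dom_diff:
  assumes d: "dom X Y" and L1: "valid L1" and L2: "valid L2"
  shows "nm (xe X L1 - xe X L2) \<le> nm (Y (val L1 - val L2))"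
proof -
  have v: "valid (L1 @ negL L2)" using L1 valid_negL[OF L2] by simp
  have "nm (xe X (L1 @ negL L2)) \<le> nm (Y (val (L1 @ negL L2)))" using d v unfolding dom_def by blast
  thus ?thesis by (simp only: xe_diff val_diff)
qed

lemma dom_tri:
  assumes d: "dom X Y" and L1: "valid L1" and L2: "valid L2" and w: "w \<in> D"
  shows "nm (xe X L1 - xe X L2) \<le> nm (Y (w - val L1)) + nm (Y (w - val L2))"
proof -
  have Y: "ldag H D Y" using d by (simp add: dom_def M2_l)
  have v1: "val L1 \<in> D" and v2: "val L2 \<in> D" using L1 L2 val_D by auto
  have eq: "val L1 - val L2 = (w - val L2) - (w - val L1)" by simp
  have "Y (val L1 - val L2) = Y (w - val L2) - Y (w - val L1)"
    unfolding eq using Y v1 v2 w Dsub by (simp add: ldag_diff hsub_diff)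
  hence "nm (Y (val L1 - val L2)) \<le> nm (Y (w - val L1)) + nm (Y (w - val L2))"
    using nm_diff_le[of "Y (w - val L2)" "Y (w - val L1)"] by simp
  thus ?thesis using dom_diff[OF d L1 L2] by linarith
qed

definition lim :: "('a \<Rightarrow> 'a) \<Rightarrow> ('a \<Rightarrow> 'a) \<Rightarrow> 'a \<Rightarrow> 'a \<Rightarrow> bool" where
  "lim X Y w l \<longleftrightarrow> (\<forall>e>0. \<exists>\<delta>>0. \<forall>L. valid L \<and> nm (Y (w - val L)) < \<delta> \<longrightarrow> nm (xe X L - l) < e)"

lemma approx:
  assumes w: "w \<in> TC" and F: "finite F" "F \<subseteq> M2" and e: "e > 0"
  shows "\<exists>L. valid L \<and> (\<forall>Y\<in>F. nm (Y (w - val L)) < e)"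
proof -
  obtain y where y: "y \<in> vs.span G'" "\<forall>Y\<in>F. nm (Y (w - y)) < e" using TC_approx[OF w F e] by blast
  obtain L where "valid L" "val L = y" using span_val[OF y(1)] by blast
  thus ?thesis using y(2) by blast
qed

lemma lim_intro:
  assumes d: "dom X Y" and w: "w \<in> TC"
    and h: "\<And>e. e > 0 \<Longrightarrow> \<exists>L. valid L \<and> nm (Y (w - val L)) < e \<and> nm (xe X L - l) < e"
  shows "lim X Y w l"
  unfolding lim_def
proof (intro allI impI)
  fix e :: real assume e: "e > 0"
  obtain L' where L': "valid L'" "nm (Y (w - val L')) < e/3" "nm (xe X L' - l) < e/3"
    using h[of "e/3"] e by auto
  have wD: "w \<in> D" using w TC_D by blast
  show "\<exists>\<delta>>0. \<forall>L. valid L \<and> nm (Y (w - val L)) < \<delta> \<longrightarrow> nm (xe X L - l) < e"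
  proof (intro exI[of _ "e/3"] conjI allI impI)
    show "e / 3 > 0" using e by simp
    fix L assume L: "valid L \<and> nm (Y (w - val L)) < e / 3"
    have "nm (xe X L - l) \<le> nm (xe X L - xe X L') + nm (xe X L' - l)" by (rule nm_triangle_diff)
    also have "nm (xe X L - xe X L') \<le> nm (Y (w - val L)) + nm (Y (w - val L'))"
      using dom_tri[OF d _ L'(1) wD] L by blast
    finally show "nm (xe X L - l) < e" using L L' by linarith
  qed
qed

lemma lim_elim:
  assumes d: "dom X Y" and w: "w \<in> TC" and lm: "lim X Y w l"
    and F: "finite F" "F \<subseteq> M2" and e: "e > 0"
  shows "\<exists>L. valid L \<and> (\<forall>Y'\<in>F. nm (Y' (w - val L)) < e) \<and> nm (Y (w - val L)) < e \<and> nm (xe X L - l) < e"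
proof -
  obtain \<delta> where \<delta>: "\<delta> > 0" "\<forall>L. valid L \<and> nm (Y (w - val L)) < \<delta> \<longrightarrow> nm (xe X L - l) < e"
    using lm e unfolding lim_def by blast
  have Y: "Y \<in> M2" using d by (simp add: dom_def)
  obtain L where L: "valid L" "\<forall>Y'\<in>insert Y F. nm (Y' (w - val L)) < min e \<delta>"
    using approx[OF w _ _, of "insert Y F" "min e \<delta>"] F Y e \<delta>(1) by auto
  thus ?thesis using \<delta>(2) by (intro exI[of _ L]) auto
qed

lemma lim_unique:
  assumes d: "dom X Y" and w: "w \<in> TC" and l1: "lim X Y w l1" and l2: "lim X Y w l2"
  shows "l1 = l2"
proof -
  have "nm (l1 - l2) < e" if e: "e > 0" for e
  proof -
    obtain L where L: "valid L" "nm (xe X L - l1) < e/2"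
      using lim_elim[OF d w l1, of "{}" "e/2"] e by auto
    obtain \<delta> where \<delta>: "\<delta> > 0" "\<forall>L. valid L \<and> nm (Y (w - val L)) < \<delta> \<longrightarrow> nm (xe X L - l2) < e/2"
      using l2 e unfolding lim_def by (meson half_gt_zero)
    obtain L' where L': "valid L'" "nm (Y (w - val L')) < \<delta>" "nm (xe X L' - l1) < e/2"
      using lim_elim[OF d w l1, of "{}" "min \<delta> (e/2)"] e \<delta>(1) by auto
    have "nm (xe X L' - l2) < e/2" using \<delta>(2) L' by blast
    have "nm (l1 - l2) \<le> nm (l1 - xe X L') + nm (xe X L' - l2)" by (rule nm_triangle_diff)
    also have "nm (l1 - xe X L') = nm (xe X L' - l1)" by (rule nm_commute)
    finally show ?thesis using L' \<open>nm (xe X L' - l2) < e/2\<close> by linarith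
  qed
  thus ?thesis using nm_small_zero[of "l1 - l2"] by simp
qed

end

context setting begin

lemma xe_comp:
  assumes A: "A \<in> M" and X: "X \<in> S1" and L: "valid L"
  shows "xe (redA A \<circ> X) L = A (xe X L)"
  using L
proof (induct L)
  case Nil then show ?case by (simp add: ldag_zero[OF Ml[OF A] Dsub])
next
  case (Cons p L)
  have ED: "X (E (snd p)) \<in> ED" using Cons.prems S1_ED[OF X] by simp
  hence XD: "X (E (snd p)) \<in> D" using ED_sub_D by auto
  have C: "fst p \<in> Mw" using Cons.prems by simp
  have "xe (redA A \<circ> X) (p # L) = fst p (A (X (E (snd p)))) + A (xe X L)"
    using Cons ED by (simp add: redA_ED comp_def)
  also have "fst p (A (X (E (snd p)))) = A (fst p (X (E (snd p))))" by (rule M_comm[OF C A XD])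
  also have "A (fst p (X (E (snd p)))) + A (xe X L) = A (fst p (X (E (snd p))) + xe X L)"
    using ldag_add[OF Ml[OF A] Mw_D[OF C XD] xe_D[OF X]] Cons.prems by simp
  finally show ?case by simp
qed

lemma lim_exists:
  assumes X: "X \<in> S1" and d: "dom X Y" and w: "w \<in> TC"
  shows "\<exists>l\<in>D. lim X Y w l"
proof -
  have Y: "Y \<in> M2" using d by (simp add: dom_def)
  have wD: "w \<in> D" using w TC_D by blast
  have domA: "\<exists>YA. dom (redA A \<circ> X) YA" if A: "A \<in> M" for A
  proof -
    have "redA A \<in> S1" using A RM_S1 by (auto simp: reduce_eq)
    hence "redA A \<circ> X \<in> S1" using X by (rule S1_comp)
    thus ?thesis by (rule dom_ex)
  qed
  define B0 where "B0 = {(F, e). finite F \<and> F \<subseteq> M2 \<and> (e::real) > 0}"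
  define S where "S = (\<lambda>(F, e). {xe X L | L. valid L \<and> (\<forall>Y'\<in>F. nm (Y' (w - val L)) < e)})"
  define Fl where "Fl = (INF b\<in>B0. principal (S b))"
  have "({}, 1) \<in> B0" unfolding B0_def by simp
  hence B0ne: "B0 \<noteq> {}" by blast
  have dir: "\<exists>x\<in>B0. principal (S x) \<le> inf (principal (S a)) (principal (S b))"
    if a: "a \<in> B0" and b: "b \<in> B0" for a b
  proof -
    obtain F1 e1 F2 e2 where ab: "a = (F1, e1)" "b = (F2, e2)" by fastforce
    have c: "(F1 \<union> F2, min e1 e2) \<in> B0" using a b ab unfolding B0_def by auto
    have "S (F1 \<union> F2, min e1 e2) \<subseteq> S a \<inter> S b" unfolding S_def ab by fastforce
    thus ?thesis using c by (intro bexI[of _ "(F1 \<union> F2, min e1 e2)"]) auto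
  qed
  have ev: "eventually P Fl \<longleftrightarrow> (\<exists>b\<in>B0. \<forall>x\<in>S b. P x)" for P
    unfolding Fl_def by (subst eventually_INF_base[OF B0ne dir]) (auto simp: eventually_principal)
  have Sne: "\<exists>L. valid L \<and> (\<forall>Y'\<in>F. nm (Y' (w - val L)) < e)" if "(F, e) \<in> B0" for F e
    using approx[OF w] that unfolding B0_def by auto
  have nbot: "Fl \<noteq> bot"
  proof
    assume "Fl = bot"
    hence "eventually (\<lambda>x. False) Fl" by simp
    then obtain b where b: "b \<in> B0" "\<forall>x\<in>S b. False" using ev by blast
    obtain F e where "b = (F, e)" by fastforce
    then obtain L where "valid L" "\<forall>Y'\<in>F. nm (Y' (w - val L)) < e" using Sne b(1) by blast
    hence "xe X L \<in> S b" unfolding S_def using \<open>b = (F, e)\<close> by auto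
    thus False using b(2) by blast
  qed
  have evD: "eventually (\<lambda>x. x \<in> D) Fl"
  proof -
    have "({}, 1) \<in> B0" unfolding B0_def by simp
    moreover have "\<forall>x\<in>S ({}, 1). x \<in> D" unfolding S_def using xe_D[OF X] by auto
    ultimately show ?thesis using ev by blast
  qed
  have cauchy: "\<forall>A\<in>M. \<forall>e>0. \<exists>P. eventually P Fl \<and>
            (\<forall>x y. P x \<and> P y \<and> x \<in> D \<and> y \<in> D \<longrightarrow> nm (A (x - y)) < e)"
  proof (intro ballI allI impI)
    fix A and e :: real assume A: "A \<in> M" and e: "e > 0"
    obtain YA where dA: "dom (redA A \<circ> X) YA" using domA[OF A] by blast
    have YA: "YA \<in> M2" using dA by (simp add: dom_def)
    define P where "P = (\<lambda>x. x \<in> S ({YA}, e/2))"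
    have "({YA}, e/2) \<in> B0" unfolding B0_def using YA e by simp
    hence "eventually P Fl" unfolding P_def using ev by blast
    moreover have "nm (A (x - y)) < e" if "P x" "P y" "x \<in> D" "y \<in> D" for x y
    proof -
      obtain L1 where L1: "valid L1" "nm (YA (w - val L1)) < e/2" "x = xe X L1"
        using \<open>P x\<close> unfolding P_def S_def by auto
      obtain L2 where L2: "valid L2" "nm (YA (w - val L2)) < e/2" "y = xe X L2"
        using \<open>P y\<close> unfolding P_def S_def by auto
      have "A (x - y) = A x - A y" using ldag_diff[OF Ml[OF A] Dsub] that by simp
      also have "\<dots> = xe (redA A \<circ> X) L1 - xe (redA A \<circ> X) L2"
        using xe_comp[OF A X] L1 L2 by simp
      finally have "nm (A (x - y)) \<le> nm (YA (w - val L1)) + nm (YA (w - val L2))"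
        using dom_tri[OF dA L1(1) L2(1) wD] by simp
      thus ?thesis using L1 L2 by linarith
    qed
    ultimately show "\<exists>P. eventually P Fl \<and> (\<forall>x y. P x \<and> P y \<and> x \<in> D \<and> y \<in> D \<longrightarrow> nm (A (x - y)) < e)"
      by blast
  qed
  have cl: "\<forall>F :: 'a filter. F \<noteq> bot \<and> eventually (\<lambda>x. x \<in> D) F \<and>
        (\<forall>X\<in>M. \<forall>e>0. \<exists>P. eventually P F \<and>
            (\<forall>x y. P x \<and> P y \<and> x \<in> D \<and> y \<in> D \<longrightarrow> hnorm H (X (x - y)) < e)) \<longrightarrow>
        (\<exists>l\<in>D. \<forall>X\<in>M. \<forall>e>0. eventually (\<lambda>x. hnorm H (X (x - l)) < e) F)"
    using Mclosed unfolding closed_ostar_def by (elim conjE)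
  obtain l where l: "l \<in> D" "\<forall>A\<in>M. \<forall>e>0. eventually (\<lambda>x. nm (A (x - l)) < e) Fl"
    using cl[rule_format, of Fl] nbot evD cauchy by blast
  have evl: "eventually (\<lambda>x. nm (x - l) < e) Fl" if e: "e > 0" for e
  proof -
    have "eventually (\<lambda>x. nm (idop D (x - l)) < e) Fl" using l Mid e by blast
    with evD have "eventually (\<lambda>x. x \<in> D \<and> nm (idop D (x - l)) < e) Fl"
      by (rule eventually_conj)
    thus ?thesis
    proof (rule eventually_mono)
      fix x assume "x \<in> D \<and> nm (idop D (x - l)) < e"
      moreover hence "x - l \<in> D" using l(1) Dsub by (simp add: hsub_diff)
      ultimately show "nm (x - l) < e" by (simp add: idop_def)
    qed
  qed
  have "lim X Y w l"
  proof (rule lim_intro[OF d w])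
    fix e :: real assume e: "e > 0"
    obtain b where b: "b \<in> B0" "\<forall>x\<in>S b. nm (x - l) < e" using evl[OF e] ev by blast
    obtain F e' where be: "b = (F, e')" by fastforce
    have F: "finite F" "F \<subseteq> M2" "e' > 0" using b(1) be unfolding B0_def by auto
    obtain L where L: "valid L" "\<forall>Y'\<in>insert Y F. nm (Y' (w - val L)) < min e e'"
      using approx[OF w, of "insert Y F" "min e e'"] F Y e by auto
    have "xe X L \<in> S b" unfolding S_def be using L by auto
    hence "nm (xe X L - l) < e" using b(2) by blast
    thus "\<exists>L. valid L \<and> nm (Y (w - val L)) < e \<and> nm (xe X L - l) < e" using L by auto
  qed
  thus ?thesis using l(1) by blast
qed

end

context setting begin

lemma idop_nm: "x \<in> D \<Longrightarrow> idop D x = x" by (simp add: idop_def)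

lemma lim_elim1:
  assumes d: "dom X Y" and w: "w \<in> TC" and lm: "lim X Y w l" and e: "e > 0"
  shows "\<exists>L. valid L \<and> nm (w - val L) < e \<and> nm (Y (w - val L)) < e \<and> nm (xe X L - l) < e"
proof -
  obtain L where L: "valid L" "\<forall>Y'\<in>{idop D}. nm (Y' (w - val L)) < e" "nm (Y (w - val L)) < e" "nm (xe X L - l) < e"
    using lim_elim[OF d w lm, of "{idop D}" e] M2_idop e by auto
  have "w - val L \<in> D" using w TC_D val_D[OF L(1)] Dsub by (auto simp: hsub_diff)
  thus ?thesis using L by (intro exI[of _ L]) (simp add: idop_nm)
qed

lemma dom_Yl: "dom X Y \<Longrightarrow> ldag H D Y" by (simp add: dom_def M2_l)

lemma lim_add:
  assumes d: "dom X Y" and w1: "w1 \<in> TC" and w2: "w2 \<in> TC" and w: "w1 + w2 \<in> TC"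
    and l1: "lim X Y w1 l1" and l2: "lim X Y w2 l2"
  shows "lim X Y (w1 + w2) (l1 + l2)"
proof (rule lim_intro[OF d w])
  fix e :: real assume e: "e > 0"
  obtain L1 where L1: "valid L1" "nm (Y (w1 - val L1)) < e/2" "nm (xe X L1 - l1) < e/2"
    using lim_elim1[OF d w1 l1, of "e/2"] e by auto
  obtain L2 where L2: "valid L2" "nm (Y (w2 - val L2)) < e/2" "nm (xe X L2 - l2) < e/2"
    using lim_elim1[OF d w2 l2, of "e/2"] e by auto
  have a: "w1 - val L1 \<in> D" "w2 - val L2 \<in> D" using w1 w2 TC_D val_D L1(1) L2(1) Dsub
    by (auto simp: hsub_diff)
  have eq1: "w1 + w2 - val (L1 @ L2) = (w1 - val L1) + (w2 - val L2)" by (simp add: algebra_simps)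
  have "Y (w1 + w2 - val (L1 @ L2)) = Y (w1 - val L1) + Y (w2 - val L2)"
    unfolding eq1 by (rule ldag_add[OF dom_Yl[OF d] a])
  hence n1: "nm (Y (w1 + w2 - val (L1 @ L2))) < e"
    using nm_triangle[of "Y (w1 - val L1)" "Y (w2 - val L2)"] L1 L2 by simp
  have eq2: "xe X (L1 @ L2) - (l1 + l2) = (xe X L1 - l1) + (xe X L2 - l2)" by (simp add: algebra_simps)
  have n2: "nm (xe X (L1 @ L2) - (l1 + l2)) < e"
    unfolding eq2 using nm_triangle[of "xe X L1 - l1" "xe X L2 - l2"] L1 L2 by simp
  show "\<exists>L. valid L \<and> nm (Y (w1 + w2 - val L)) < e \<and> nm (xe X L - (l1 + l2)) < e"
    using n1 n2 L1(1) L2(1) by (intro exI[of _ "L1 @ L2"]) simp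
qed

lemma lim_sm:
  assumes d: "dom X Y" and w: "w \<in> TC" and w': "sm c w \<in> TC" and l: "lim X Y w l"
  shows "lim X Y (sm c w) (sm c l)"
proof (rule lim_intro[OF d w'])
  fix e :: real assume e: "e > 0"
  define e' where "e' = e / (cmod c + 1)"
  have p: "cmod c + 1 > 0" using norm_ge_zero[of c] by linarith
  have e': "e' > 0" using e p by (simp add: e'_def)
  have ce: "cmod c * e' < e" unfolding e'_def using e p
    by (simp add: field_simps)
  obtain L where L: "valid L" "nm (Y (w - val L)) < e'" "nm (xe X L - l) < e'"
    using lim_elim1[OF d w l e'] by auto
  have a: "w - val L \<in> D" using w TC_D val_D[OF L(1)] Dsub by (auto simp: hsub_diff)
  have "sm c w - val (smL c L) = sm c (w - val L)" by (simp add: val_smL vs.scale_right_diff_distrib)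
  hence "Y (sm c w - val (smL c L)) = sm c (Y (w - val L))" using ldag_sm[OF dom_Yl[OF d] a] by simp
  hence n1: "nm (Y (sm c w - val (smL c L))) \<le> cmod c * e'"
    using L(2) by (simp add: nm_scale mult_left_mono)
  have "xe X (smL c L) - sm c l = sm c (xe X L - l)" by (simp add: xe_smL vs.scale_right_diff_distrib)
  hence n2: "nm (xe X (smL c L) - sm c l) \<le> cmod c * e'" using L(3) by (simp add: nm_scale mult_left_mono)
  show "\<exists>L. valid L \<and> nm (Y (sm c w - val L)) < e \<and> nm (xe X L - sm c l) < e"
    using n1 n2 ce valid_smL[OF L(1)] by (intro exI[of _ "smL c L"]) auto
qed

lemma lim_C:
  assumes C: "C \<in> Mw" and d: "dom X Y" and w: "w \<in> TC" and w': "C w \<in> TC" and l: "lim X Y w l"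
  shows "lim X Y (C w) (C l)"
proof (rule lim_intro[OF d w'])
  fix e :: real assume e: "e > 0"
  note Cb = wcomm_bop[OF C]
  obtain B where B: "B \<ge> 0" "\<forall>x. nm (C x) \<le> B * nm x" using bop_bound[OF Cb] by auto
  define e' where "e' = e / (B + 1)"
  have e': "e' > 0" using e B by (simp add: e'_def)
  have ce: "B * e' < e" unfolding e'_def using e B by (simp add: field_simps)
  obtain L where L: "valid L" "nm (Y (w - val L)) < e'" "nm (xe X L - l) < e'"
    using lim_elim1[OF d w l e'] by auto
  have Y: "Y \<in> M2" using d by (simp add: dom_def)
  have a: "w - val L \<in> D" using w TC_D val_D[OF L(1)] Dsub by (auto simp: hsub_diff)
  have "C w - val (cL C L) = C (w - val L)" by (simp add: val_cL[OF C] bopU[OF Cb])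
  hence "Y (C w - val (cL C L)) = C (Y (w - val L))" using M2_comm[OF C Y a] by simp
  hence "nm (Y (C w - val (cL C L))) \<le> B * nm (Y (w - val L))" using B by simp
  also have "\<dots> \<le> B * e'" using L(2) B by (simp add: mult_left_mono)
  finally have n1: "nm (Y (C w - val (cL C L))) < e" using ce by simp
  have "xe X (cL C L) - C l = C (xe X L - l)" by (simp add: xe_cL[OF C] bopU[OF Cb])
  hence "nm (xe X (cL C L) - C l) \<le> B * nm (xe X L - l)" using B by simp
  also have "\<dots> \<le> B * e'" using L(3) B by (simp add: mult_left_mono)
  finally have n2: "nm (xe X (cL C L) - C l) < e" using ce by simp
  show "\<exists>L. valid L \<and> nm (Y (C w - val L)) < e \<and> nm (xe X L - C l) < e"
    using n1 n2 valid_cL[OF C L(1)] by (intro exI[of _ "cL C L"]) auto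
qed

lemma lim_E:
  assumes d: "dom X Y" and \<xi>: "\<xi> \<in> D" and w: "E \<xi> \<in> TC"
  shows "lim X Y (E \<xi>) (X (E \<xi>))"
proof (rule lim_intro[OF d w])
  fix e :: real assume e: "e > 0"
  have v: "valid [((\<lambda>x. x), \<xi>)]" using Mw_id \<xi> by simp
  have Y0: "Y 0 = 0" using ldag_zero[OF dom_Yl[OF d] Dsub] .
  show "\<exists>L. valid L \<and> nm (Y (E \<xi> - val L)) < e \<and> nm (xe X L - X (E \<xi>)) < e"
    using v e Y0 by (intro exI[of _ "[((\<lambda>x. x), \<xi>)]"]) simp
qed

lemma lim_Kz:
  assumes X: "X \<in> S1" and d: "dom X Y" and w: "w \<in> TC" and l: "lim X Y w l"
  shows "l \<in> Kz"
proof -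
  have "l \<in> hclosure H SG"
  proof (rule hclosureI)
    fix e :: real assume e: "e > 0"
    obtain L where L: "valid L" "nm (xe X L - l) < e" using lim_elim1[OF d w l e] by auto
    have "nm (l - xe X L) < e" using L(2) nm_commute[of l "xe X L"] by simp
    thus "\<exists>y\<in>SG. nm (l - y) < e" using xe_SG[OF X L(1)] by (intro bexI[of _ "xe X L"])
  qed
  thus ?thesis .
qed

definition Yof :: "('a \<Rightarrow> 'a) \<Rightarrow> 'a \<Rightarrow> 'a" where "Yof X = (SOME Y. dom X Y)"
definition Xt0 :: "('a \<Rightarrow> 'a) \<Rightarrow> 'a \<Rightarrow> 'a" where "Xt0 X w = (SOME l. l \<in> D \<and> lim X (Yof X) w l)"
definition Xt :: "('a \<Rightarrow> 'a) \<Rightarrow> 'a \<Rightarrow> 'a" where "Xt X = (\<lambda>d. if d \<in> D then Xt0 X (Z d) else 0)"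

lemma Yof: "X \<in> S1 \<Longrightarrow> dom X (Yof X)"
  unfolding Yof_def using dom_ex by (rule someI_ex)

lemma Xt0: assumes X: "X \<in> S1" and w: "w \<in> TC"
  shows "Xt0 X w \<in> D" "lim X (Yof X) w (Xt0 X w)"
proof -
  have "\<exists>l. l \<in> D \<and> lim X (Yof X) w l" using lim_exists[OF X Yof[OF X] w] by blast
  hence "Xt0 X w \<in> D \<and> lim X (Yof X) w (Xt0 X w)" unfolding Xt0_def by (rule someI_ex)
  thus "Xt0 X w \<in> D" "lim X (Yof X) w (Xt0 X w)" by auto
qed

lemma Xt0_eq: "X \<in> S1 \<Longrightarrow> w \<in> TC \<Longrightarrow> lim X (Yof X) w l \<Longrightarrow> Xt0 X w = l"
  using lim_unique[OF Yof _ Xt0(2)] by blast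

lemma ZTC: "d \<in> D \<Longrightarrow> Z d \<in> TC" by (rule Z_TC)

lemma Xt_D: "X \<in> S1 \<Longrightarrow> d \<in> D \<Longrightarrow> Xt X d \<in> D"
  by (simp add: Xt_def Xt0 ZTC)

lemma Xt_add: assumes X: "X \<in> S1" and d1: "d1 \<in> D" and d2: "d2 \<in> D"
  shows "Xt X (d1 + d2) = Xt X d1 + Xt X d2"
proof -
  have s: "d1 + d2 \<in> D" using d1 d2 Dsub by (simp add: hsub_add)
  have "Xt0 X (Z d1 + Z d2) = Xt0 X (Z d1) + Xt0 X (Z d2)"
  proof (rule Xt0_eq[OF X])
    show "Z d1 + Z d2 \<in> TC" using ZTC[OF s] by (simp add: Z_add)
    show "lim X (Yof X) (Z d1 + Z d2) (Xt0 X (Z d1) + Xt0 X (Z d2))"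
      by (rule lim_add[OF Yof[OF X] ZTC[OF d1] ZTC[OF d2]]) (use ZTC[OF s] in \<open>simp_all add: Z_add Xt0 X ZTC d1 d2\<close>)
  qed
  thus ?thesis using d1 d2 s by (simp add: Xt_def Z_add)
qed

lemma Xt_sm: assumes X: "X \<in> S1" and d: "d \<in> D"
  shows "Xt X (sm c d) = sm c (Xt X d)"
proof -
  have s: "sm c d \<in> D" using d Dsub by (simp add: hsub_sm)
  have "Xt0 X (sm c (Z d)) = sm c (Xt0 X (Z d))"
  proof (rule Xt0_eq[OF X])
    show "sm c (Z d) \<in> TC" using ZTC[OF s] by (simp add: Z_sm)
    show "lim X (Yof X) (sm c (Z d)) (sm c (Xt0 X (Z d)))"
      by (rule lim_sm[OF Yof[OF X] ZTC[OF d]]) (use ZTC[OF s] in \<open>simp_all add: Z_sm Xt0 X ZTC d\<close>)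
  qed
  thus ?thesis using d s by (simp add: Xt_def Z_sm)
qed

lemma Xt_C: assumes X: "X \<in> S1" and C: "C \<in> Mw" and d: "d \<in> D"
  shows "C (Xt X d) = Xt X (C d)"
proof -
  have s: "C d \<in> D" using Mw_D[OF C d] .
  have "Xt0 X (C (Z d)) = C (Xt0 X (Z d))"
  proof (rule Xt0_eq[OF X])
    show "C (Z d) \<in> TC" using ZTC[OF s] by (simp add: Z_comm[OF C])
    show "lim X (Yof X) (C (Z d)) (C (Xt0 X (Z d)))"
      by (rule lim_C[OF C Yof[OF X] ZTC[OF d]]) (use ZTC[OF s] in \<open>simp_all add: Z_comm[OF C] Xt0 X ZTC d\<close>)
  qed
  thus ?thesis using d s by (simp add: Xt_def Z_comm[OF C])
qed

lemma Xt_E: assumes X: "X \<in> S1" and \<xi>: "\<xi> \<in> D" shows "Xt X (E \<xi>) = X (E \<xi>)"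
proof -
  have ED: "E \<xi> \<in> D" using \<xi> ED_sub_D by auto
  have w: "E \<xi> \<in> TC" using ZTC[OF ED] by (simp add: Z_E)
  have "Xt0 X (E \<xi>) = X (E \<xi>)" by (rule Xt0_eq[OF X w lim_E[OF Yof[OF X] \<xi> w]])
  thus ?thesis using ED by (simp add: Xt_def Z_E)
qed

lemma Xt_Kz: "X \<in> S1 \<Longrightarrow> d \<in> D \<Longrightarrow> Xt X d \<in> Kz"
  using lim_Kz[OF _ Yof ZTC Xt0(2)[OF _ ZTC]] by (simp add: Xt_def)

end

context setting begin

lemma ip_adj_left: assumes C': "\<forall>a b. ip (C a) b = ip a (C' b)" shows "ip u (C v) = ip (C' u) v"
proof -
  have "ip u (C v) = cnj (ip (C v) u)" by (rule ip_sym)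
  also have "ip (C v) u = ip v (C' u)" using C' by simp
  also have "cnj (ip v (C' u)) = ip (C' u) v" by (rule ip_sym[symmetric])
  finally show ?thesis .
qed

lemma single_id:
  assumes X: "X \<in> S1" and C: "C \<in> Mw" and C': "C' \<in> Mw" and \<xi>: "\<xi> \<in> D" and \<eta>: "\<eta> \<in> D"
  shows "ip (C (X (E \<xi>))) (C' (E \<eta>)) = ip (C (E \<xi>)) (C' (dag H ED X (E \<eta>)))"
proof -
  obtain Cs where Cs: "Cs \<in> Mw" "\<forall>a b. ip (C' a) b = ip a (Cs b)" using Mw_adj[OF C'] by blast
  define T where "T = (\<lambda>x. Cs (C x))"
  have T: "T \<in> Mw" unfolding T_def by (rule Mw_comp[OF Cs(1) C])
  define a where "a = E \<xi>"
  define b where "b = E \<eta>"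
  have a: "a \<in> ED" and b: "b \<in> ED" using \<xi> \<eta> by (auto simp: a_def b_def)
  have Xa: "X a \<in> ED" using S1_ED[OF X \<xi>] by (simp add: a_def)
  have Wb: "dag H ED X b \<in> ED" using S1_ED[OF S1_dag[OF X] \<eta>] by (simp add: b_def)
  have key: "ip (TE T (X a)) b = ip (TE T a) (dag H ED X b)" by (rule bicommD[OF X TE_w[OF T] a b])
  have "ip (TE T (X a)) b = ip (E (T (X a))) b" using Xa ED_sub_RE by (auto simp: TE_def)
  also have "\<dots> = ip (T (X a)) (E b)" by (rule E_sa)
  also have "\<dots> = ip (T (X a)) b" using ED_fix[OF b] by simp
  finally have k1: "ip (TE T (X a)) b = ip (T (X a)) b" .
  have "ip (TE T a) (dag H ED X b) = ip (E (T a)) (dag H ED X b)" using a ED_sub_RE by (auto simp: TE_def)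
  also have "\<dots> = ip (T a) (E (dag H ED X b))" by (rule E_sa)
  also have "\<dots> = ip (T a) (dag H ED X b)" using ED_fix[OF Wb] by simp
  finally have k2: "ip (TE T a) (dag H ED X b) = ip (T a) (dag H ED X b)" .
  have "ip (C (X a)) (C' b) = ip (T (X a)) b" unfolding T_def by (rule ip_adj_left[OF Cs(2)])
  also have "\<dots> = ip (T a) (dag H ED X b)" using key k1 k2 by simp
  also have "\<dots> = ip (C a) (C' (dag H ED X b))" unfolding T_def by (rule ip_adj_left[OF Cs(2), symmetric])
  finally show ?thesis by (simp add: a_def b_def)
qed

lemma fin_id1:
  assumes X: "X \<in> S1" and C: "C \<in> Mw" and \<xi>: "\<xi> \<in> D" and L2: "valid L2"
  shows "ip (C (X (E \<xi>))) (val L2) = ip (C (E \<xi>)) (xe (dag H ED X) L2)"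
  using L2
proof (induct L2)
  case Nil then show ?case by simp
next
  case (Cons q L2)
  thus ?case using single_id[OF X C _ \<xi>, of "fst q" "snd q"] by (simp add: ip_add_right)
qed

lemma fin_id:
  assumes X: "X \<in> S1" and L1: "valid L1" and L2: "valid L2"
  shows "ip (xe X L1) (val L2) = ip (val L1) (xe (dag H ED X) L2)"
  using L1
proof (induct L1)
  case Nil then show ?case by simp
next
  case (Cons p L1)
  thus ?case using fin_id1[OF X _ _ L2, of "fst p" "snd p"] by (simp add: ip_add_left)
qed

lemma ip_bound: assumes "nm a \<le> x" "nm b \<le> y" shows "cmod (ip a b) \<le> x * y"
proof -
  have "nm a * nm b \<le> x * y"
  proof (rule mult_mono)
    show "0 \<le> x" using assms(1) nm_nonneg[of a] by linarith
  qed (use assms in auto)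
  thus ?thesis using cs[of a b] by linarith
qed

lemma eps_le: "(0::real) < K \<Longrightarrow> \<epsilon> \<le> e / K \<Longrightarrow> 0 \<le> \<epsilon> \<Longrightarrow> \<epsilon> * K \<le> e"
  by (simp add: pos_le_divide_eq)

lemma adj_id:
  assumes X: "X \<in> S1" and w1: "w1 \<in> TC" and w2: "w2 \<in> TC"
  shows "ip (Xt0 X w1) w2 = ip w1 (Xt0 (dag H ED X) w2)"
proof -
  define W where "W = dag H ED X"
  have W: "W \<in> S1" unfolding W_def by (rule S1_dag[OF X])
  define l1 where "l1 = Xt0 X w1"
  define l2 where "l2 = Xt0 W w2"
  have lm1: "lim X (Yof X) w1 l1" unfolding l1_def by (rule Xt0(2)[OF X w1])
  have lm2: "lim W (Yof W) w2 l2" unfolding l2_def by (rule Xt0(2)[OF W w2])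
  have bnd: "cmod (ip l1 w2 - ip w1 l2) \<le> 4 * e" if e: "e > 0" for e
  proof -
    define K1 where "K1 = nm l2 + 2"
    define K2 where "K2 = nm w2 + 1"
    have K: "K1 > 0" "K2 > 0" by (simp_all add: K1_def K2_def add_nonneg_pos)
    define \<epsilon>1 where "\<epsilon>1 = min (e / K1) (e / K2)"
    have \<epsilon>1: "\<epsilon>1 > 0" using e K by (simp add: \<epsilon>1_def)
    obtain L1 where L1: "valid L1" "nm (w1 - val L1) < \<epsilon>1" "nm (xe X L1 - l1) < \<epsilon>1"
      using lim_elim1[OF Yof[OF X] w1 lm1 \<epsilon>1] by auto
    define K3 where "K3 = nm (xe X L1) + 1"
    define K4 where "K4 = nm w1 + 1"
    have K': "K3 > 0" "K4 > 0" by (simp_all add: K3_def K4_def add_nonneg_pos)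
    define \<epsilon>2 where "\<epsilon>2 = min 1 (min (e / K3) (e / K4))"
    have \<epsilon>2: "\<epsilon>2 > 0" using e K' by (simp add: \<epsilon>2_def)
    obtain L2 where L2: "valid L2" "nm (w2 - val L2) < \<epsilon>2" "nm (xe W L2 - l2) < \<epsilon>2"
      using lim_elim1[OF Yof[OF W] w2 lm2 \<epsilon>2] by auto
    have fid: "ip (xe X L1) (val L2) = ip (val L1) (xe W L2)"
      unfolding W_def by (rule fin_id[OF X L1(1) L2(1)])
    have decomp: "ip l1 w2 - ip w1 l2 = ip (l1 - xe X L1) w2 + ip (xe X L1) (w2 - val L2)
        + (ip (xe X L1) (val L2) - ip (val L1) (xe W L2)) + ip (val L1 - w1) (xe W L2) + ip w1 (xe W L2 - l2)"
      by (simp add: ip_diff_left ip_diff_right)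
    have t1: "cmod (ip (l1 - xe X L1) w2) \<le> e"
    proof -
      have "cmod (ip (l1 - xe X L1) w2) \<le> \<epsilon>1 * K2"
        using L1(3) nm_commute[of l1 "xe X L1"] by (intro ip_bound) (simp_all add: K2_def)
      also have "\<dots> \<le> e" using eps_le[OF K(2), of \<epsilon>1 e] \<epsilon>1 by (simp add: \<epsilon>1_def)
      finally show ?thesis .
    qed
    have t2: "cmod (ip (xe X L1) (w2 - val L2)) \<le> e"
    proof -
      have "cmod (ip (xe X L1) (w2 - val L2)) \<le> K3 * \<epsilon>2"
        using L2(2) by (intro ip_bound) (simp_all add: K3_def)
      also have "\<dots> \<le> e" using eps_le[OF K'(1), of \<epsilon>2 e] \<epsilon>2 by (simp add: \<epsilon>2_def mult.commute)
      finally show ?thesis .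
    qed
    have t4: "cmod (ip (val L1 - w1) (xe W L2)) \<le> e"
    proof -
      have "nm (xe W L2) \<le> nm (xe W L2 - l2) + nm l2"
        using nm_triangle[of "xe W L2 - l2" l2] by simp
      hence "nm (xe W L2) \<le> K1" using L2(3) \<epsilon>2 by (simp add: K1_def \<epsilon>2_def)
      hence "cmod (ip (val L1 - w1) (xe W L2)) \<le> \<epsilon>1 * K1"
        using L1(2) nm_commute[of w1 "val L1"] by (intro ip_bound) simp_all
      also have "\<dots> \<le> e" using eps_le[OF K(1), of \<epsilon>1 e] \<epsilon>1 by (simp add: \<epsilon>1_def)
      finally show ?thesis .
    qed
    have t5: "cmod (ip w1 (xe W L2 - l2)) \<le> e"
    proof -
      have "cmod (ip w1 (xe W L2 - l2)) \<le> K4 * \<epsilon>2"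
        using L2(3) by (intro ip_bound) (simp_all add: K4_def)
      also have "\<dots> \<le> e" using eps_le[OF K'(2), of \<epsilon>2 e] \<epsilon>2 by (simp add: \<epsilon>2_def mult.commute)
      finally show ?thesis .
    qed
    define a where "a = ip (l1 - xe X L1) w2"
    define b where "b = ip (xe X L1) (w2 - val L2)"
    define c where "c = ip (val L1 - w1) (xe W L2)"
    define d where "d = ip w1 (xe W L2 - l2)"
    have eq: "ip l1 w2 - ip w1 l2 = a + b + c + d" using decomp fid by (simp add: a_def b_def c_def d_def)
    have tri: "cmod (a + b + c + d) \<le> cmod a + cmod b + cmod c + cmod d"
      using norm_triangle_ineq[of "a + b + c" d] norm_triangle_ineq[of "a + b" c] norm_triangle_ineq[of a b]
      by linarith
    have "cmod (ip l1 w2 - ip w1 l2) \<le> cmod a + cmod b + cmod c + cmod d" using eq tri by simp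
    moreover have "cmod a \<le> e" "cmod b \<le> e" "cmod c \<le> e" "cmod d \<le> e"
      using t1 t2 t4 t5 by (simp_all add: a_def b_def c_def d_def)
    ultimately have "cmod (ip l1 w2 - ip w1 l2) \<le> 4 * e" by linarith
    thus ?thesis .
  qed
  have "cmod (ip l1 w2 - ip w1 l2) = 0"
  proof (rule antisym)
    show "cmod (ip l1 w2 - ip w1 l2) \<le> 0"
    proof (rule field_le_epsilon)
      fix e :: real assume "e > 0"
      hence "cmod (ip l1 w2 - ip w1 l2) \<le> 4 * (e / 4)" by (intro bnd) simp
      thus "cmod (ip l1 w2 - ip w1 l2) \<le> 0 + e" by simp
    qed
  qed simp
  thus ?thesis by (simp add: l1_def l2_def W_def)
qed

end

context setting begin

lemma Kz_orth: "k \<in> Kz \<Longrightarrow> ip k x = ip k (Z x)"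
proof -
  assume k: "k \<in> Kz"
  have "ip (x - Z x) k = 0" by (rule Zp(2)[OF k])
  hence "ip k (x - Z x) = 0" by (metis complex_cnj_zero ip_sym)
  thus ?thesis by (simp add: ip_diff_right)
qed

lemma Kz_orth': "k \<in> Kz \<Longrightarrow> ip x k = ip (Z x) k"
proof -
  assume k: "k \<in> Kz"
  have "ip (x - Z x) k = 0" by (rule Zp(2)[OF k])
  thus ?thesis by (simp add: ip_diff_left)
qed

lemma Xt_adj: assumes X: "X \<in> S1" and \<xi>: "\<xi> \<in> D" and \<eta>: "\<eta> \<in> D"
  shows "ip (Xt X \<xi>) \<eta> = ip \<xi> (Xt (dag H ED X) \<eta>)"
proof -
  have W: "dag H ED X \<in> S1" by (rule S1_dag[OF X])
  have "ip (Xt X \<xi>) \<eta> = ip (Xt X \<xi>) (Z \<eta>)" by (rule Kz_orth[OF Xt_Kz[OF X \<xi>]])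
  also have "\<dots> = ip (Xt0 X (Z \<xi>)) (Z \<eta>)" using \<xi> by (simp add: Xt_def)
  also have "\<dots> = ip (Z \<xi>) (Xt0 (dag H ED X) (Z \<eta>))" by (rule adj_id[OF X ZTC[OF \<xi>] ZTC[OF \<eta>]])
  also have "\<dots> = ip (Z \<xi>) (Xt (dag H ED X) \<eta>)" using \<eta> by (simp add: Xt_def)
  also have "\<dots> = ip \<xi> (Xt (dag H ED X) \<eta>)" by (rule Kz_orth'[OF Xt_Kz[OF W \<eta>], symmetric])
  finally show ?thesis .
qed

lemma Xt_ldag: assumes X: "X \<in> S1" shows "ldag H D (Xt X)"
  unfolding ldag_def
proof (intro conjI ballI allI impI)
  fix x assume "x \<in> D" thus "Xt X x \<in> D" by (rule Xt_D[OF X])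
next
  fix x y assume "x \<in> D" "y \<in> D" thus "Xt X (x + y) = Xt X x + Xt X y" by (rule Xt_add[OF X])
next
  fix c x assume "x \<in> D" thus "Xt X (sm c x) = sm c (Xt X x)" by (rule Xt_sm[OF X])
next
  fix x assume "x \<notin> D" thus "Xt X x = 0" by (simp add: Xt_def)
next
  fix \<eta> assume \<eta>: "\<eta> \<in> D"
  show "\<exists>\<zeta>\<in>D. \<forall>\<xi>\<in>D. ip (Xt X \<xi>) \<eta> = ip \<xi> \<zeta>"
    using Xt_adj[OF X _ \<eta>] Xt_D[OF S1_dag[OF X] \<eta>] by blast
qed

lemma Xt_dag: assumes X: "X \<in> S1" and \<eta>: "\<eta> \<in> D"
  shows "dag H D (Xt X) \<eta> = Xt (dag H ED X) \<eta>"
  by (rule gdag_unique[OF gD \<eta> Xt_D[OF S1_dag[OF X] \<eta>]]) (rule Xt_adj[OF X _ \<eta>])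

lemma Xt_M2: assumes X: "X \<in> S1" shows "Xt X \<in> M2"
  unfolding bicomm_def
proof (intro CollectI conjI ballI)
  show "ldag H D (Xt X)" by (rule Xt_ldag[OF X])
next
  fix C \<xi> \<eta> assume C: "C \<in> Mw" and \<xi>: "\<xi> \<in> D" and \<eta>: "\<eta> \<in> D"
  have "ip (C (Xt X \<xi>)) \<eta> = ip (Xt X (C \<xi>)) \<eta>" by (simp add: Xt_C[OF X C \<xi>])
  also have "\<dots> = ip (C \<xi>) (Xt (dag H ED X) \<eta>)" by (rule Xt_adj[OF X Mw_D[OF C \<xi>] \<eta>])
  also have "\<dots> = ip (C \<xi>) (dag H D (Xt X) \<eta>)" by (simp add: Xt_dag[OF X \<eta>])
  finally show "ip (C (Xt X \<xi>)) \<eta> = ip (C \<xi>) (dag H D (Xt X) \<eta>)" .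
qed

lemma Xt_red: assumes X: "X \<in> S1" shows "redA (Xt X) = X"
proof
  fix x show "redA (Xt X) x = X x"
  proof (cases "x \<in> ED")
    case True
    then obtain \<xi> where \<xi>: "\<xi> \<in> D" "x = E \<xi>" by blast
    have "redA (Xt X) x = Xt X (E \<xi>)" using True \<xi> by (simp add: redA_ED)
    also have "\<dots> = X (E \<xi>)" by (rule Xt_E[OF X \<xi>(1)])
    finally show ?thesis using \<xi> by simp
  next
    case False
    thus ?thesis using ldag_out[OF bicomm_ldag[OF X] False] by (simp add: redA_def)
  qed
qed

theorem main: "S1 = reduce E D M2"
proof
  show "S1 \<subseteq> reduce E D M2"
  proof
    fix X assume X: "X \<in> S1"
    have "X = redA (Xt X)" by (simp add: Xt_red[OF X])
    thus "X \<in> reduce E D M2" using Xt_M2[OF X] by (simp add: reduce_eq)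
  qed
next
  show "reduce E D M2 \<subseteq> S1" using easy by (auto simp: reduce_eq)
qed

end

theorem lemma2p3:
  fixes H :: "('a::ab_group_add) hs" and D :: "'a set" and M :: "('a \<Rightarrow> 'a) set"
    and E :: "'a \<Rightarrow> 'a" and Z :: "'a \<Rightarrow> 'a"
  assumes hilb: "is_hilbert H"
    and Dsub: "hsubspace H D" and Ddense: "hclosure H D = UNIV"
    and Mclosed: "closed_ostar H D M"
    and MwD: "\<forall>C\<in>wcomm H UNIV D M. C ` D \<subseteq> D"
    and Ein: "E \<in> wcomm H UNIV D M" and Eproj: "is_projection H UNIV E"
    and Zdef: "Z = central_support H UNIV D M E"
    and cond_i: "\<forall>X\<in>bicomm H (range E) (E ` D) (reduce E D M). \<exists>Y\<in>bicomm H UNIV D M.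
        \<forall>(n::nat) C \<xi> \<eta>. (\<forall>k<n. C k \<in> wcomm H UNIV D M \<and> \<xi> k \<in> D) \<and> \<eta> \<in> D \<longrightarrow>
          hnorm H (\<Sum>k<n. C k (X (E (\<xi> k))))
            \<le> hnorm H (Y ((\<Sum>k<n. C k (E (\<xi> k))) + (\<eta> - Z \<eta>)))"
    and cond_ii: "tclosure H (bicomm H UNIV D M) D
        (module.span (hs_sm H) {C (E \<xi>) | C \<xi>. C \<in> wcomm H UNIV D M \<and> \<xi> \<in> D}) = Z ` D"
  shows "bicomm H (range E) (E ` D) (reduce E D M) = reduce E D (bicomm H UNIV D M)"
proof -
  interpret setting H D M E Z
    by (unfold_locales) (rule hilb Dsub Ddense Mclosed MwD Ein Eproj Zdef cond_i cond_ii)+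
  show ?thesis by (rule main)
qed


end
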